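(* Assume all $\lambda_k>0$ and $\mu_k>0$. Let $\mu_{\min}=\min_k\mu_k$, $\mu_{\max}=\max_k\mu_k$, $r_\mu=\mu_{\max}/\mu_{\min}$, let $\mu^{\min}$ (resp. $\mu^{\max}$) be the vector with all entries equal to $\mu_{\min}$ (resp. $\mu_{\max}$), and let $C_{m,n}=\{m'\in\mathbb{Z}_+^K: m'_k\ge m_k\ \forall k,\ \sum_km'_k=\sum_km_k+n\}$. Let $\bar X$ be stationary for the two-layer loss system with parameters $(m,n,\lambda,\mu)$, $\bar X(m',0,\lambda,\mu^{\max})$ stationary for the system with parameters $(m',0,\lambda,\mu^{\max})$, and $\bar X^{\mathrm{mp}}(m,n,\lambda,\mu^{\min})$ stationary for the maximum packing system with parameters $(m,n,\lambda,\mu^{\min})$. Then for every $m'\in C_{m,n}$, $|\bar X(m',0,\lambda,\mu^{\max})|\le_{\mathrm{st}}|\bar X|\le_{\mathrm{st}}|\bar X^{\mathrm{mp}}(m,n,\lambda,\mu^{\min})|$. Consequently, writing $a=\mathbb{E}|\bar X|$, $\theta$ for the mean throughput and $b$ for the overall blocking probability (with corresponding quantities for the other systems indicated by their parameters and superscript mp): $\max_{m'\in C_{m,n}}a(m',0,\lambda,\mu^{\max})\le a\le a^{\mathrm{mp}}(m,n,\lambda,\mu^{\min})$; $\max_{m'\in C_{m,n}}r_\mu^{-1}\theta(m',0,\lambda,\mu^{\max})\le\theta\le r_\mu\,\theta^{\mathrm{mp}}(m,n,\lambda,\mu^{\min})$; $1-r_\mu\big(1-b^{\mathrm{mp}}(m,n,\lambda,\mu^{\min})\big)\le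 b\le\min_{m'\in C_{m,n}}\big(1-r_\mu^{-1}(1-b(m',0,\lambda,\mu^{\max}))\big)$.
   Context: Two-layer loss system with parameters $(m,n,\lambda,\mu)$ ($m\in\mathbb{Z}_+^K$ layer-1 servers dedicated per class, $n$ shared layer-2 servers, arrival rates $\lambda_k$, service rates $\mu_k$): Markov process on $S=\{x\in\mathbb{Z}_+^K\times\mathbb{Z}_+^K:x_{1,k}\le m_k\ \forall k,\ \sum_kx_{2,k}\le n\}$ with transitions $x\mapsto x+e_{1,k}$ at rate $\lambda_k1(x_{1,k}<m_k)$, $x\mapsto x+e_{2,k}$ at rate $\lambda_k1(x_{1,k}=m_k,\sum_lx_{2,l}<n)$, $x\mapsto x-e_{i,k}$ at rate $\mu_kx_{i,k}$. The maximum packing system has the same arrival transitions but departures $x\mapsto x-e_{1,k}$ at rate $\mu_kx_{1,k}1(x_{2,k}=0)$ and $x\mapsto x-e_{2,k}$ at rate $\mu_kx_{1,k}1(x_{2,k}>0)+\mu_kx_{2,k}$. Each of these processes has a unique stationary distribution. $|x|=\sum_{i,k}x_{i,k}$. For a system with stationary state $\bar X$: $a_k=\mathbb{E}(\bar X_{1,k}+\bar X_{2,k})$, $\theta_k=\mu_ka_k$, $\theta=\sum_k\theta_k$, $a=\sum_ka_k$, $b_k=P(\bar X\in B_k)$ with $B_k=\{x:x_{1,k}=m_k,\sum_lx_{2,l}=n\}$, and the overall blocking probability $b$ is defined by $(\sum_k\lambda_k)(1-b)=\theta$, i.e. $b=\sum_k\lambda_kb_k/\sum_k\lambda_k$. $\le_{\mathrm{st}}$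 is the usual stochastic order of real random variables. *)

theory Defs
  imports Complex_Main
begin

text \<open>Classes are indexed by 0..<K. A state is a pair (x1, x2) of functions
nat => nat (layer-1 and layer-2 occupancies), which vanish outside 0..<K.\<close>

type_synonym state = "(nat \<Rightarrow> nat) \<times> (nat \<Rightarrow> nat)"

definition state_space :: "nat \<Rightarrow> (nat \<Rightarrow> nat) \<Rightarrow> nat \<Rightarrow> state set" where
  "state_space K m n = {(x1, x2).
      (\<forall>k<K. x1 k \<le> m k) \<and> (\<forall>k\<ge>K. x1 k = 0 \<and> x2 k = 0) \<and> (\<Sum>k<K. x2 k) \<le> n}"

definition size_st :: "nat \<Rightarrow> state \<Rightarrow> nat" where
  "size_st K x = (\<Sum>k<K. fst x k + snd x k)"

definition add1 :: "state \<Rightarrow> nat \<Rightarrow> state" where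
  "add1 x k = ((fst x)(k := fst x k + 1), snd x)"
definition add2 :: "state \<Rightarrow> nat \<Rightarrow> state" where
  "add2 x k = (fst x, (snd x)(k := snd x k + 1))"
definition sub1 :: "state \<Rightarrow> nat \<Rightarrow> state" where
  "sub1 x k = ((fst x)(k := fst x k - 1), snd x)"
definition sub2 :: "state \<Rightarrow> nat \<Rightarrow> state" where
  "sub2 x k = (fst x, (snd x)(k := snd x k - 1))"

text \<open>Transition rate from x to y (for y \<noteq> x) of the two-layer loss system.\<close>
definition loss_rate ::
  "nat \<Rightarrow> (nat \<Rightarrow> nat) \<Rightarrow> nat \<Rightarrow> (nat \<Rightarrow> real) \<Rightarrow> (nat \<Rightarrow> real) \<Rightarrow> state \<Rightarrow> state \<Rightarrow> real" where
  "loss_rate K m n lam mu x y = (\<Sum>k<K.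
      (if y = add1 x k \<and> fst x k < m k then lam k else 0)
    + (if y = add2 x k \<and> fst x k = m k \<and> (\<Sum>l<K. snd x l) < n then lam k else 0)
    + (if y = sub1 x k then mu k * real (fst x k) else 0)
    + (if y = sub2 x k then mu k * real (snd x k) else 0))"

text \<open>Transition rate from x to y (for y \<noteq> x) of the maximum packing system.\<close>
definition mp_rate ::
  "nat \<Rightarrow> (nat \<Rightarrow> nat) \<Rightarrow> nat \<Rightarrow> (nat \<Rightarrow> real) \<Rightarrow> (nat \<Rightarrow> real) \<Rightarrow> state \<Rightarrow> state \<Rightarrow> real" where
  "mp_rate K m n lam mu x y = (\<Sum>k<K.
      (if y = add1 x k \<and> fst x k < m k then lam k else 0)
    + (if y = add2 x k \<and> fst x k = m k \<and> (\<Sum>l<K. snd x l) < n then lam k else 0)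
    + (if y = sub1 x k \<and> snd x k = 0 then mu k * real (fst x k) else 0)
    + (if y = sub2 x k then
         (if snd x k > 0 then mu k * real (fst x k) else 0) + mu k * real (snd x k)
       else 0))"

definition stationary :: "'s set \<Rightarrow> ('s \<Rightarrow> 's \<Rightarrow> real) \<Rightarrow> ('s \<Rightarrow> real) \<Rightarrow> bool" where
  "stationary S q p \<longleftrightarrow> (\<forall>x\<in>S. p x \<ge> 0) \<and> (\<Sum>x\<in>S. p x) = 1 \<and>
     (\<forall>y\<in>S. (\<Sum>x\<in>S-{y}. p x * q x y) = p y * (\<Sum>x\<in>S-{y}. q y x))"

definition size_st_le :: "nat \<Rightarrow> state set \<Rightarrow> (state \<Rightarrow> real) \<Rightarrow> state set \<Rightarrow> (state \<Rightarrow> real) \<Rightarrow> bool" where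
  "size_st_le K S1 p1 S2 p2 \<longleftrightarrow>
     (\<forall>t::real. (\<Sum>x\<in>{x\<in>S1. real (size_st K x) > t}. p1 x)
              \<le> (\<Sum>x\<in>{x\<in>S2. real (size_st K x) > t}. p2 x))"

definition mean_k :: "state set \<Rightarrow> (state \<Rightarrow> real) \<Rightarrow> nat \<Rightarrow> real" where
  "mean_k S p k = (\<Sum>x\<in>S. p x * real (fst x k + snd x k))"

definition mean_total :: "nat \<Rightarrow> state set \<Rightarrow> (state \<Rightarrow> real) \<Rightarrow> real" where
  "mean_total K S p = (\<Sum>k<K. mean_k S p k)"

definition throughput :: "nat \<Rightarrow> (nat \<Rightarrow> real) \<Rightarrow> state set \<Rightarrow> (state \<Rightarrow> real) \<Rightarrow> real" where
  "throughput K mu S p = (\<Sum>k<K. mu k * mean_k S p k)"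

definition blocking_set :: "nat \<Rightarrow> (nat \<Rightarrow> nat) \<Rightarrow> nat \<Rightarrow> nat \<Rightarrow> state set" where
  "blocking_set K m n k = {x. fst x k = m k \<and> (\<Sum>l<K. snd x l) = n}"

definition blocking :: "nat \<Rightarrow> (nat \<Rightarrow> nat) \<Rightarrow> nat \<Rightarrow> (nat \<Rightarrow> real) \<Rightarrow> state set \<Rightarrow> (state \<Rightarrow> real) \<Rightarrow> real" where
  "blocking K m n lam S p =
     (\<Sum>k<K. lam k * (\<Sum>x\<in>S \<inter> blocking_set K m n k. p x)) / (\<Sum>k<K. lam k)"

definition C_set :: "nat \<Rightarrow> (nat \<Rightarrow> nat) \<Rightarrow> nat \<Rightarrow> (nat \<Rightarrow> nat) set" where
  "C_set K m n = {m'. (\<forall>k<K. m' k \<ge> m k) \<and> (\<Sum>k<K. m' k) = (\<Sum>k<K. m k) + n}"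

end

theory Submission
  imports Defs
begin


lemma stationary_scale:
  assumes "finite S" "stationary S q w0" "c > 0"
  shows "(\<forall>x\<in>S. w0 x / c \<ge> 0) \<and> (\<forall>y\<in>S. (\<Sum>x\<in>S-{y}. w0 x / c * q x y) = w0 y / c * (\<Sum>x\<in>S-{y}. q y x))"
  using assms by (auto simp: stationary_def sum_divide_distrib[symmetric])

lemma stat_exists:
  fixes S :: "'s set"
  assumes "finite S" "S \<noteq> {}"
  shows "(\<forall>x\<in>S. \<forall>y\<in>S. x\<noteq>y \<longrightarrow> q x y \<ge> 0) \<Longrightarrow> \<exists>p. stationary S q p"
  using assms
proof (induction S arbitrary: q rule: finite_ne_induct)
  case (singleton z)
  show ?case by (rule exI[of _ "\<lambda>_. 1"]) (auto simp: stationary_def)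
next
  case (insert z F)
  define qz where "qz = (\<Sum>x\<in>F. q z x)"
  have qnn: "\<And>x y. x \<in> insert z F \<Longrightarrow> y \<in> insert z F \<Longrightarrow> x \<noteq> y \<Longrightarrow> q x y \<ge> 0"
    using insert.prems by blast
  have qz_nn: "qz \<ge> 0" unfolding qz_def using qnn insert.hyps by (intro sum_nonneg) auto
  show ?case
  proof (cases "qz = 0")
    case True
    have z0: "q z y = 0" if "y \<in> F" for y
    proof -
      have "\<forall>x\<in>F. q z x \<ge> 0" using qnn insert.hyps by auto
      then show ?thesis using True that insert.hyps unfolding qz_def
        by (simp add: sum_nonneg_eq_0_iff)
    qed
    define p where "p = (\<lambda>x. if x = z then 1 else (0::real))"
    have "stationary (insert z F) q p"
      unfolding stationary_def
    proof (intro conjI ballI)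
      show "0 \<le> p x" for x unfolding p_def by auto
      show "sum p (insert z F) = 1" using insert.hyps by (simp add: p_def)
      fix y assume y: "y \<in> insert z F"
      show "(\<Sum>x\<in>insert z F - {y}. p x * q x y) = p y * (\<Sum>x\<in>insert z F - {y}. q y x)"
      proof (cases "y = z")
        case True
        then have e: "insert z F - {y} = F" using insert.hyps by auto
        have "(\<Sum>x\<in>insert z F - {y}. p x * q x y) = 0" unfolding e using insert.hyps
          by (intro sum.neutral) (auto simp: p_def)
        moreover have "p y * (\<Sum>x\<in>insert z F - {y}. q y x) = 0"
          unfolding e using True \<open>qz = 0\<close> by (simp add: qz_def)
        ultimately show ?thesis by simp
      next
        case False
        then have yF: "y \<in> F" using y by auto
        have "(\<Sum>x\<in>insert z F - {y}. p x * q x y) = p z * q z y + (\<Sum>x\<in>F - {y}. p x * q x y)"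
          using False insert.hyps by (subst insert_Diff_if) (auto)
        also have "(\<Sum>x\<in>F - {y}. p x * q x y) = 0" using insert.hyps by (intro sum.neutral) (auto simp: p_def)
        finally show ?thesis using z0[OF yF] False by (simp add: p_def)
      qed
    qed
    then show ?thesis by blast
  next
    case False
    then have qzp: "qz > 0" using qz_nn by auto
    define q' where "q' = (\<lambda>x y. q x y + q x z * q z y / qz)"
    have "\<forall>x\<in>F. \<forall>y\<in>F. x \<noteq> y \<longrightarrow> q' x y \<ge> 0"
      unfolding q'_def using qnn qzp insert.hyps by (auto intro!: add_nonneg_nonneg divide_nonneg_pos mult_nonneg_nonneg)
    from insert.IH[OF this] obtain p' where p': "stationary F q' p'" by blast
    define wz where "wz = (\<Sum>u\<in>F. p' u * q u z) / qz"
    define w where "w = (\<lambda>x. if x = z then wz else p' x)"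
    have p'nn: "\<forall>x\<in>F. p' x \<ge> 0" and p'sum: "sum p' F = 1"
      and p'bal: "\<forall>y\<in>F. (\<Sum>x\<in>F-{y}. p' x * q' x y) = p' y * (\<Sum>x\<in>F-{y}. q' y x)"
      using p' by (auto simp: stationary_def)
    have wz_nn: "wz \<ge> 0" unfolding wz_def using p'nn qnn qzp insert.hyps
      by (intro divide_nonneg_pos sum_nonneg mult_nonneg_nonneg) auto
    have sumw: "sum w (insert z F) = 1 + wz"
    proof -
      have "sum w (insert z F) = w z + sum w F" using insert.hyps by simp
      also have "sum w F = sum p' F" using insert.hyps by (intro sum.cong) (auto simp: w_def)
      finally show ?thesis using p'sum by (simp add: w_def)
    qed
    have bal: "(\<Sum>x\<in>insert z F - {y}. w x * q x y) = w y * (\<Sum>x\<in>insert z F - {y}. q y x)"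
      if y: "y \<in> insert z F" for y
    proof (cases "y = z")
      case True
      then have e: "insert z F - {y} = F" using insert.hyps by auto
      have "(\<Sum>x\<in>F. w x * q x z) = (\<Sum>x\<in>F. p' x * q x z)"
        using insert.hyps by (intro sum.cong) (auto simp: w_def)
      then show ?thesis using True e qzp by (simp add: w_def wz_def qz_def)
    next
      case False
      then have yF: "y \<in> F" using y by auto
      have e: "insert z F - {y} = insert z (F - {y})" using False by auto
      have zn: "z \<notin> F - {y}" using insert.hyps by auto
      have fin: "finite (F - {y})" using insert.hyps by auto
      define A where "A = (\<Sum>x\<in>F-{y}. p' x * q x y)"
      define B where "B = (\<Sum>x\<in>F-{y}. q y x)"
      have L: "(\<Sum>x\<in>insert z F - {y}. w x * q x y) = wz * q z y + A"
      proof -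
        have "(\<Sum>x\<in>insert z F - {y}. w x * q x y) = w z * q z y + (\<Sum>x\<in>F-{y}. w x * q x y)"
          unfolding e using zn fin by simp
        also have "(\<Sum>x\<in>F-{y}. w x * q x y) = A" unfolding A_def using insert.hyps
          by (intro sum.cong) (auto simp: w_def)
        finally show ?thesis by (simp add: w_def)
      qed
      have R: "(\<Sum>x\<in>insert z F - {y}. q y x) = q y z + B"
        unfolding e B_def using zn fin by simp
      have s1: "(\<Sum>x\<in>F-{y}. p' x * q x z) = wz * qz - p' y * q y z"
        using qzp yF insert.hyps by (simp add: wz_def sum_diff1)
      have s2: "(\<Sum>x\<in>F-{y}. q z x) = qz - q z y"
        using yF insert.hyps by (simp add: qz_def sum_diff1)
      have "(\<Sum>x\<in>F-{y}. p' x * q' x y) = A + q z y / qz * (\<Sum>x\<in>F-{y}. p' x * q x z)"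
        unfolding q'_def A_def by (simp add: algebra_simps sum.distrib sum_distrib_left sum_divide_distrib)
      also have "\<dots> = A + q z y * wz - p' y * q y z * q z y / qz"
        using qzp by (simp add: s1 field_simps)
      finally have l2: "(\<Sum>x\<in>F-{y}. p' x * q' x y) = A + q z y * wz - p' y * q y z * q z y / qz" .
      have "(\<Sum>x\<in>F-{y}. q' y x) = B + q y z / qz * (\<Sum>x\<in>F-{y}. q z x)"
        unfolding q'_def B_def by (simp add: algebra_simps sum.distrib sum_distrib_left sum_divide_distrib)
      also have "\<dots> = B + q y z - q y z * q z y / qz"
        using qzp by (simp add: s2 field_simps)
      finally have r2: "(\<Sum>x\<in>F-{y}. q' y x) = B + q y z - q y z * q z y / qz" .
      have "A + q z y * wz = p' y * (B + q y z)"
        using p'bal[rule_format, OF yF] l2 r2 by (simp add: algebra_simps)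
      then show ?thesis using L R False by (simp add: w_def algebra_simps)
    qed
    define p where "p = (\<lambda>x. w x / (1 + wz))"
    have "stationary (insert z F) q p"
      unfolding stationary_def
    proof (intro conjI ballI)
      show "0 \<le> p x" if "x \<in> insert z F" for x
        using that p'nn wz_nn unfolding p_def w_def by auto
      show "sum p (insert z F) = 1" unfolding p_def using sumw wz_nn
        by (simp add: sum_divide_distrib[symmetric])
      fix y assume "y \<in> insert z F"
      from bal[OF this] show "(\<Sum>x\<in>insert z F - {y}. p x * q x y) = p y * (\<Sum>x\<in>insert z F - {y}. q y x)"
        unfolding p_def by (simp add: sum_divide_distrib[symmetric] times_divide_eq_left)
    qed
    then show ?thesis by blast
  qed
qed



definition balanced :: "'s set \<Rightarrow> ('s \<Rightarrow> 's \<Rightarrow> real) \<Rightarrow> ('s \<Rightarrow> real) \<Rightarrow> bool" where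
  "balanced S q v \<longleftrightarrow> (\<forall>y\<in>S. (\<Sum>x\<in>S-{y}. v x * q x y) = v y * (\<Sum>x\<in>S-{y}. q y x))"

lemma stationary_balanced: "stationary S q p \<Longrightarrow> balanced S q p"
  by (simp add: stationary_def balanced_def)

lemma sum_offdiag: "finite S \<Longrightarrow> (\<Sum>y\<in>S-{x}. g y) = (\<Sum>y\<in>S. if y = x then 0 else g y)"
  by (rule sum.mono_neutral_cong_left) auto

lemma sum_swap_offdiag:
  assumes "finite S"
  shows "(\<Sum>x\<in>S. \<Sum>y\<in>S-{x}. g x y) = (\<Sum>y\<in>S. \<Sum>x\<in>S-{y}. g x y)"
proof -
  have "(\<Sum>x\<in>S. \<Sum>y\<in>S-{x}. g x y) = (\<Sum>x\<in>S. \<Sum>y\<in>S. if y = x then 0 else g x y)"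
    using assms by (simp add: sum_offdiag)
  also have "\<dots> = (\<Sum>y\<in>S. \<Sum>x\<in>S. if y = x then 0 else g x y)" by (rule sum.swap)
  also have "\<dots> = (\<Sum>y\<in>S. \<Sum>x\<in>S-{y}. g x y)"
    using assms by (simp add: sum_offdiag eq_commute)
  finally show ?thesis .
qed

lemma balanced_lin:
  assumes "balanced S q v1" "balanced S q v2"
  shows "balanced S q (\<lambda>x. v1 x - c * v2 x)"
  unfolding balanced_def
proof
  fix y assume y: "y \<in> S"
  have "(\<Sum>x\<in>S-{y}. (v1 x - c * v2 x) * q x y) = (\<Sum>x\<in>S-{y}. v1 x * q x y) - c * (\<Sum>x\<in>S-{y}. v2 x * q x y)"
    by (simp add: left_diff_distrib sum_subtractf sum_distrib_left mult.assoc)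
  also have "\<dots> = v1 y * (\<Sum>x\<in>S-{y}. q y x) - c * (v2 y * (\<Sum>x\<in>S-{y}. q y x))"
    using assms y unfolding balanced_def by simp
  finally show "(\<Sum>x\<in>S-{y}. (v1 x - c * v2 x) * q x y) = (v1 y - c * v2 y) * (\<Sum>x\<in>S-{y}. q y x)"
    by (simp add: algebra_simps)
qed

lemma stat_drift:
  assumes "finite S" "balanced S q p"
  shows "(\<Sum>x\<in>S. p x * (\<Sum>y\<in>S-{x}. q x y * (f y - f x))) = 0"
proof -
  have "(\<Sum>x\<in>S. p x * (\<Sum>y\<in>S-{x}. q x y * f y)) = (\<Sum>x\<in>S. \<Sum>y\<in>S-{x}. p x * q x y * f y)"
    by (simp add: sum_distrib_left mult.assoc)
  also have "\<dots> = (\<Sum>y\<in>S. \<Sum>x\<in>S-{y}. p x * q x y * f y)" using assms(1) by (rule sum_swap_offdiag)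
  also have "\<dots> = (\<Sum>y\<in>S. f y * (\<Sum>x\<in>S-{y}. p x * q x y))"
    by (simp add: sum_distrib_left mult.commute mult.left_commute)
  also have "\<dots> = (\<Sum>y\<in>S. f y * (p y * (\<Sum>x\<in>S-{y}. q y x)))"
    using assms(2) by (simp add: balanced_def)
  finally have e: "(\<Sum>x\<in>S. p x * (\<Sum>y\<in>S-{x}. q x y * f y)) = (\<Sum>y\<in>S. f y * (p y * (\<Sum>x\<in>S-{y}. q y x)))" .
  have "(\<Sum>x\<in>S. p x * (\<Sum>y\<in>S-{x}. q x y * (f y - f x)))
      = (\<Sum>x\<in>S. p x * (\<Sum>y\<in>S-{x}. q x y * f y)) - (\<Sum>x\<in>S. f x * (p x * (\<Sum>y\<in>S-{x}. q x y)))"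
    by (simp add: right_diff_distrib sum_subtractf sum_distrib_left sum_distrib_right mult_ac)
  then show ?thesis using e by simp
qed

lemma cut_flow:
  assumes "finite S" "A \<subseteq> S" "balanced S q p"
  shows "(\<Sum>y\<in>A. \<Sum>x\<in>S-A. p x * q x y) = (\<Sum>y\<in>A. p y * (\<Sum>x\<in>S-A. q y x))"
proof -
  have fA: "finite A" using assms finite_subset by blast
  have split: "(\<Sum>x\<in>S-{y}. g x) = (\<Sum>x\<in>A-{y}. g x) + (\<Sum>x\<in>S-A. g x)" if "y \<in> A" for y and g :: "_ \<Rightarrow> real"
  proof -
    have "S - {y} = (A - {y}) \<union> (S - A)" using that assms(2) by auto
    then show ?thesis using assms(1) fA by (subst sum.union_disjoint[symmetric]) auto
  qed
  have "(\<Sum>y\<in>A. \<Sum>x\<in>S-{y}. p x * q x y) = (\<Sum>y\<in>A. p y * (\<Sum>x\<in>S-{y}. q y x))"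
    using assms(2,3) unfolding balanced_def by (intro sum.cong) auto
  then have "(\<Sum>y\<in>A. \<Sum>x\<in>A-{y}. p x * q x y) + (\<Sum>y\<in>A. \<Sum>x\<in>S-A. p x * q x y)
      = (\<Sum>y\<in>A. \<Sum>x\<in>A-{y}. p y * q y x) + (\<Sum>y\<in>A. p y * (\<Sum>x\<in>S-A. q y x))"
    by (simp add: split sum.distrib sum_distrib_left distrib_left)
  moreover have "(\<Sum>y\<in>A. \<Sum>x\<in>A-{y}. p x * q x y) = (\<Sum>y\<in>A. \<Sum>x\<in>A-{y}. p y * q y x)"
    using sum_swap_offdiag[OF fA, of "\<lambda>x y. p x * q x y"] by simp
  ultimately show ?thesis by simp
qed

inductive reach :: "'s set \<Rightarrow> ('s \<Rightarrow> 's \<Rightarrow> real) \<Rightarrow> 's \<Rightarrow> 's \<Rightarrow> bool" for S q where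
  rrefl: "reach S q z z"
| rstep: "x \<in> S \<Longrightarrow> y \<in> S \<Longrightarrow> x \<noteq> y \<Longrightarrow> q x y > 0 \<Longrightarrow> reach S q y z \<Longrightarrow> reach S q x z"

lemma reach_trans: "reach S q a b \<Longrightarrow> reach S q b c \<Longrightarrow> reach S q a c"
  by (induction rule: reach.induct) (auto intro: reach.rstep)

lemma reach_snoc: "reach S q a b \<Longrightarrow> b \<in> S \<Longrightarrow> c \<in> S \<Longrightarrow> b \<noteq> c \<Longrightarrow> q b c > 0 \<Longrightarrow> reach S q a c"
  by (erule reach_trans) (auto intro: reach.intros)

lemma sum_nn_zero: "finite A \<Longrightarrow> \<forall>x\<in>A. f x \<ge> 0 \<Longrightarrow> sum f A = 0 \<Longrightarrow> x \<in> A \<Longrightarrow> f x = (0::real)"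
  by (simp add: sum_nonneg_eq_0_iff)

lemma propagate_zero:
  assumes "finite S" "balanced S q v" "\<forall>x\<in>S. v x \<ge> 0" "\<forall>x\<in>S. \<forall>y\<in>S. x \<noteq> y \<longrightarrow> q x y \<ge> 0"
    "y \<in> S" "v y = 0" "x \<in> S" "x \<noteq> y" "q x y > 0"
  shows "v x = 0"
proof -
  have fin': "finite (S - {y})" using assms(1) by blast
  have s: "(\<Sum>u\<in>S-{y}. v u * q u y) = 0"
  proof -
    have "(\<Sum>u\<in>S-{y}. v u * q u y) = v y * (\<Sum>u\<in>S-{y}. q y u)"
      using assms(2,5) unfolding balanced_def by blast
    then show ?thesis using assms(6) by simp
  qed
  have nn: "\<forall>u\<in>S-{y}. v u * q u y \<ge> 0"
  proof
    fix u assume u: "u \<in> S - {y}"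
    then have "v u \<ge> 0" using assms(3) by blast
    moreover have "q u y \<ge> 0" using u assms(4,5) by blast
    ultimately show "v u * q u y \<ge> 0" by (rule mult_nonneg_nonneg)
  qed
  have xin: "x \<in> S - {y}" using assms(7,8) by blast
  have "v x * q x y = 0" by (rule sum_nn_zero[OF fin' nn s xin])
  then show ?thesis using assms(9) by simp
qed

lemma zero_back:
  assumes "finite S" "balanced S q v" "\<forall>x\<in>S. v x \<ge> 0" "\<forall>x\<in>S. \<forall>y\<in>S. x \<noteq> y \<longrightarrow> q x y \<ge> 0"
  shows "reach S q x z \<Longrightarrow> v z = 0 \<Longrightarrow> x \<in> S \<Longrightarrow> v x = 0"
proof (induction rule: reach.induct)
  case (rrefl z) then show ?case by simp
next
  case (rstep x y z)
  have vy: "v y = 0" using rstep.IH rstep.prems(1) rstep.hyps(2) by blast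
  show ?case by (rule propagate_zero[OF assms(1-4) rstep.hyps(2) vy rstep.hyps(1) rstep.hyps(3) rstep.hyps(4)])
qed

lemma stat_unique:
  assumes fin: "finite S" and zS: "z \<in> S" and rz: "\<forall>x\<in>S. reach S q x z"
    and qnn: "\<forall>x\<in>S. \<forall>y\<in>S. x \<noteq> y \<longrightarrow> q x y \<ge> 0"
    and p1: "stationary S q p1" and p2: "stationary S q p2"
  shows "\<forall>x\<in>S. p1 x = p2 x"
proof -
  define Rz where "Rz = {x\<in>S. reach S q z x}"
  define T where "T = S - Rz"
  have closed: "y \<in> Rz" if "x \<in> Rz" "y \<in> S" "x \<noteq> y" "q x y > 0" for x y
    using that reach_snoc[of S q z x y] unfolding Rz_def by auto
  have vanish: "\<forall>x\<in>T. p x = 0" if p: "stationary S q p" for p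
  proof -
    have bp: "balanced S q p" using p by (rule stationary_balanced)
    have pnn: "\<forall>x\<in>S. p x \<ge> 0" using p by (simp add: stationary_def)
    have TS: "T \<subseteq> S" unfolding T_def by auto
    have eq: "S - T = Rz" unfolding T_def Rz_def by auto
    have c: "(\<Sum>y\<in>T. \<Sum>x\<in>Rz. p x * q x y) = (\<Sum>y\<in>T. p y * (\<Sum>x\<in>Rz. q y x))"
      using cut_flow[OF fin TS bp] eq by simp
    have "(\<Sum>y\<in>T. \<Sum>x\<in>Rz. p x * q x y) = 0"
    proof (intro sum.neutral ballI)
      fix y x assume "y \<in> T" "x \<in> Rz"
      have xS: "x \<in> S" and yS: "y \<in> S" and yR: "y \<notin> Rz" using \<open>y \<in> T\<close> \<open>x \<in> Rz\<close> unfolding T_def Rz_def by auto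
      have "q x y = 0"
      proof (rule ccontr)
        assume "q x y \<noteq> 0"
        moreover have "x \<noteq> y" using \<open>x \<in> Rz\<close> yR by auto
        ultimately have "q x y > 0" using qnn xS yS by (metis order_le_less)
        then show False using closed[of x y] \<open>x \<in> Rz\<close> yS yR \<open>x \<noteq> y\<close> by blast
      qed
      then show "p x * q x y = 0" by simp
    qed
    then have s0: "(\<Sum>y\<in>T. p y * (\<Sum>x\<in>Rz. q y x)) = 0" using c by simp
    have fT: "finite T" "finite Rz" using fin unfolding T_def Rz_def by auto
    have edge0: "p y = 0" if "y \<in> T" "x \<in> Rz" "q y x > 0" for x y
    proof -
      have nn: "\<forall>y\<in>T. p y * (\<Sum>x\<in>Rz. q y x) \<ge> 0"
        using pnn qnn unfolding T_def Rz_def by (auto intro!: mult_nonneg_nonneg sum_nonneg)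
      have "p y * (\<Sum>x\<in>Rz. q y x) = 0" by (rule sum_nn_zero[OF fT(1) nn s0 that(1)])
      moreover have "(\<Sum>x\<in>Rz. q y x) \<ge> q y x"
        using that qnn fT unfolding T_def Rz_def
        by (intro member_le_sum) auto
      ultimately show ?thesis using that(3) by (simp add: mult_eq_0_iff)
    qed
    have "reach S q x z' \<Longrightarrow> z' = z \<longrightarrow> x \<in> T \<longrightarrow> p x = 0" for x z'
    proof (induction rule: reach.induct)
      case (rrefl z') then show ?case unfolding T_def Rz_def using zS by (auto intro: reach.rrefl)
    next
      case (rstep x y z')
      show ?case
      proof (intro impI)
        assume xT: "x \<in> T" and zz: "z' = z"
        show "p x = 0"
        proof (cases "y \<in> T")
          case True
          then have "p y = 0" using rstep.IH zz by simp
          then show ?thesis using propagate_zero[OF fin bp pnn qnn, of y x] rstep.hyps xT unfolding T_def by auto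
        next
          case False
          then have "y \<in> Rz" using rstep.hyps unfolding T_def by auto
          then show ?thesis using edge0 xT rstep.hyps by auto
        qed
      qed
    qed
    then show ?thesis using rz TS by auto
  qed
  have RzS: "Rz \<subseteq> S" unfolding Rz_def by auto
  have fRz: "finite Rz" using fin RzS finite_subset by blast
  have zRz: "z \<in> Rz" unfolding Rz_def using zS by (auto intro: reach.rrefl)
  have b1: "balanced S q p1" and b2: "balanced S q p2" using p1 p2 stationary_balanced by auto
  have nn1: "\<forall>x\<in>S. p1 x \<ge> 0" and nn2: "\<forall>x\<in>S. p2 x \<ge> 0" and s1: "sum p1 S = 1" and s2: "sum p2 S = 1"
    using p1 p2 by (auto simp: stationary_def)
  have pos2: "p2 w > 0" if "w \<in> Rz" for w
  proof (rule ccontr)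
    assume "\<not> p2 w > 0"
    then have w0: "p2 w = 0" using nn2 that RzS by force
    have "\<forall>x\<in>S. p2 x = 0"
    proof
      fix x assume "x \<in> S"
      have "reach S q z w" using that unfolding Rz_def by simp
      then have "reach S q x w" using rz \<open>x \<in> S\<close> reach_trans[of S q x z w] by simp
      then show "p2 x = 0" using zero_back[OF fin b2 nn2 qnn _ w0] \<open>x \<in> S\<close> by blast
    qed
    then have "sum p2 S = 0" by simp
    then show False using s2 by simp
  qed
  define c where "c = Min ((\<lambda>x. p1 x / p2 x) ` Rz)"
  have "c \<in> (\<lambda>x. p1 x / p2 x) ` Rz" unfolding c_def using fRz zRz by (intro Min_in) auto
  then obtain w0 where w0: "w0 \<in> Rz" "c = p1 w0 / p2 w0" by blast
  have cle: "c \<le> p1 x / p2 x" if "x \<in> Rz" for x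
    unfolding c_def using fRz that by (intro Min_le) auto
  define v where "v = (\<lambda>x. p1 x - c * p2 x)"
  have bv: "balanced S q v" unfolding v_def using b1 b2 by (rule balanced_lin)
  have T1: "\<forall>x\<in>T. p1 x = 0" and T2: "\<forall>x\<in>T. p2 x = 0" using vanish p1 p2 by auto
  have vnn: "\<forall>x\<in>S. v x \<ge> 0"
  proof
    fix x assume xS: "x \<in> S"
    show "v x \<ge> 0"
    proof (cases "x \<in> Rz")
      case True
      then have "c * p2 x \<le> p1 x" using cle[OF True] pos2[OF True] by (simp add: pos_le_divide_eq)
      then show ?thesis by (simp add: v_def)
    next
      case False
      then show ?thesis using T1 T2 xS unfolding v_def T_def by auto
    qed
  qed
  have vw0: "v w0 = 0" using w0 pos2[OF w0(1)] by (simp add: v_def)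
  have v0: "\<forall>x\<in>S. v x = 0"
  proof
    fix x assume "x \<in> S"
    have "reach S q z w0" using w0(1) unfolding Rz_def by simp
    then have "reach S q x w0" using rz \<open>x \<in> S\<close> reach_trans[of S q x z w0] by simp
    then show "v x = 0" using zero_back[OF fin bv vnn qnn _ vw0] \<open>x \<in> S\<close> by blast
  qed
  then have "sum p1 S = c * sum p2 S" unfolding v_def by (simp add: sum_distrib_left)
  then have "c = 1" using s1 s2 by simp
  then show ?thesis using v0 unfolding v_def by simp
qed



lemma sum_group_proj:
  assumes "finite R" "\<pi> ` R \<subseteq> T" "finite T"
  shows "(\<Sum>x\<in>T. \<Sum>s\<in>{s\<in>R. \<pi> s = x}. h s) = (\<Sum>s\<in>R. h s)"
  using sum.group[OF assms(1) assms(3) assms(2), of h] by simp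

lemma marginal_stationary:
  fixes R :: "'s set" and \<pi> :: "'s \<Rightarrow> 'a"
  assumes fR: "finite R" and fS: "finite S1" and piR: "\<pi> ` R \<subseteq> S1"
    and st: "stationary R qc \<rho>"
    and tr: "\<forall>s\<in>R. \<forall>x'\<in>S1. x' \<noteq> \<pi> s \<longrightarrow> (\<Sum>s'\<in>{s'\<in>R. \<pi> s' = x'}. qc s s') = q1 (\<pi> s) x'"
  shows "stationary S1 q1 (\<lambda>x. \<Sum>s\<in>{s\<in>R. \<pi> s = x}. \<rho> s)"
proof -
  define P where "P = (\<lambda>x. \<Sum>s\<in>{s\<in>R. \<pi> s = x}. \<rho> s)"
  have rnn: "\<forall>s\<in>R. \<rho> s \<ge> 0" and rsum: "sum \<rho> R = 1" and rbal: "balanced R qc \<rho>"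
    using st by (auto simp: stationary_def balanced_def)
  have Pnn: "\<forall>x\<in>S1. P x \<ge> 0" unfolding P_def using rnn by (auto intro!: sum_nonneg)
  have Psum: "sum P S1 = 1" unfolding P_def using sum_group_proj[OF fR piR fS, of \<rho>] rsum by simp
  have bal: "(\<Sum>x\<in>S1-{x0}. P x * q1 x x0) = P x0 * (\<Sum>x\<in>S1-{x0}. q1 x0 x)" if x0: "x0 \<in> S1" for x0
  proof -
    define A where "A = {s\<in>R. \<pi> s = x0}"
    have AR: "A \<subseteq> R" unfolding A_def by auto
    have fA: "finite A" using fR AR finite_subset by blast
    have cf: "(\<Sum>s\<in>A. \<Sum>s'\<in>R-A. \<rho> s' * qc s' s) = (\<Sum>s\<in>A. \<rho> s * (\<Sum>s'\<in>R-A. qc s s'))"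
      by (rule cut_flow[OF fR AR rbal])
    have piRA: "\<pi> ` (R - A) \<subseteq> S1 - {x0}" using piR unfolding A_def by auto
    have fS': "finite (S1 - {x0})" using fS by auto
    have "(\<Sum>s\<in>A. \<Sum>s'\<in>R-A. \<rho> s' * qc s' s) = (\<Sum>s'\<in>R-A. \<rho> s' * (\<Sum>s\<in>A. qc s' s))"
      by (subst sum.swap) (simp add: sum_distrib_left)
    also have "\<dots> = (\<Sum>s'\<in>R-A. \<rho> s' * q1 (\<pi> s') x0)"
    proof (intro sum.cong refl)
      fix s' assume s': "s' \<in> R - A"
      then have "x0 \<noteq> \<pi> s'" unfolding A_def by auto
      then show "\<rho> s' * (\<Sum>s\<in>A. qc s' s) = \<rho> s' * q1 (\<pi> s') x0"
        using tr s' x0 unfolding A_def by auto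
    qed
    also have "\<dots> = (\<Sum>x\<in>S1-{x0}. \<Sum>s'\<in>{s'\<in>R-A. \<pi> s' = x}. \<rho> s' * q1 (\<pi> s') x0)"
      by (rule sum_group_proj[OF _ piRA fS', symmetric]) (use fR in simp)
    also have "\<dots> = (\<Sum>x\<in>S1-{x0}. P x * q1 x x0)"
    proof (intro sum.cong refl)
      fix x assume x: "x \<in> S1 - {x0}"
      then have e: "{s'\<in>R-A. \<pi> s' = x} = {s'\<in>R. \<pi> s' = x}" unfolding A_def by auto
      show "(\<Sum>s'\<in>{s'\<in>R-A. \<pi> s' = x}. \<rho> s' * q1 (\<pi> s') x0) = P x * q1 x x0"
        unfolding e P_def by (simp add: sum_distrib_right)
    qed
    finally have L: "(\<Sum>s\<in>A. \<Sum>s'\<in>R-A. \<rho> s' * qc s' s) = (\<Sum>x\<in>S1-{x0}. P x * q1 x x0)" .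
    have inner: "(\<Sum>s'\<in>R-A. qc s s') = (\<Sum>x\<in>S1-{x0}. q1 x0 x)" if s: "s \<in> A" for s
    proof -
      have "(\<Sum>s'\<in>R-A. qc s s') = (\<Sum>x\<in>S1-{x0}. \<Sum>s'\<in>{s'\<in>R-A. \<pi> s' = x}. qc s s')"
        by (rule sum_group_proj[OF _ piRA fS', symmetric]) (use fR in simp)
      also have "\<dots> = (\<Sum>x\<in>S1-{x0}. q1 x0 x)"
      proof (intro sum.cong refl)
        fix x assume x: "x \<in> S1 - {x0}"
        then have e: "{s'\<in>R-A. \<pi> s' = x} = {s'\<in>R. \<pi> s' = x}" unfolding A_def by auto
        have "\<pi> s = x0" "s \<in> R" using s unfolding A_def by auto
        then show "(\<Sum>s'\<in>{s'\<in>R-A. \<pi> s' = x}. qc s s') = q1 x0 x"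
          unfolding e using tr x by auto
      qed
      finally show ?thesis .
    qed
    have "(\<Sum>s\<in>A. \<rho> s * (\<Sum>s'\<in>R-A. qc s s')) = (\<Sum>s\<in>A. \<rho> s) * (\<Sum>x\<in>S1-{x0}. q1 x0 x)"
      using inner by (simp add: sum_distrib_right)
    also have "(\<Sum>s\<in>A. \<rho> s) = P x0" unfolding P_def A_def by simp
    finally show ?thesis using cf L by simp
  qed
  show ?thesis unfolding stationary_def using Pnn Psum bal unfolding P_def by blast
qed



definition rep :: "'s set \<Rightarrow> ('s \<Rightarrow> 's \<Rightarrow> real) \<Rightarrow> 'e set \<Rightarrow> ('s \<Rightarrow> 'e \<Rightarrow> 's) \<Rightarrow> ('s \<Rightarrow> 'e \<Rightarrow> real) \<Rightarrow> bool" where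
  "rep S q E mv rt \<longleftrightarrow> finite E \<and> (\<forall>x\<in>S. \<forall>e\<in>E. rt x e \<ge> 0 \<and> (rt x e \<noteq> 0 \<longrightarrow> mv x e \<in> S)) \<and>
     (\<forall>x\<in>S. \<forall>x'. x' \<noteq> x \<longrightarrow> q x x' = (\<Sum>e\<in>E. if x' = mv x e then rt x e else 0))"

lemma rep_nonneg: "rep S q E mv rt \<Longrightarrow> \<forall>x\<in>S. \<forall>y\<in>S. x \<noteq> y \<longrightarrow> q x y \<ge> 0"
  unfolding rep_def by (auto intro!: sum_nonneg)

lemma rep_drift:
  assumes "rep S q E mv rt" "finite S" "x \<in> S"
  shows "(\<Sum>x'\<in>S-{x}. q x x' * (f x' - f x)) = (\<Sum>e\<in>E. rt x e * (f (mv x e) - f x))"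
proof -
  have fE: "finite E" using assms unfolding rep_def by auto
  have "(\<Sum>x'\<in>S-{x}. q x x' * (f x' - f x)) = (\<Sum>x'\<in>S-{x}. \<Sum>e\<in>E. if x' = mv x e then rt x e * (f x' - f x) else 0)"
    using assms unfolding rep_def by (intro sum.cong refl) (auto simp: sum_distrib_right intro!: sum.cong)
  also have "\<dots> = (\<Sum>e\<in>E. \<Sum>x'\<in>S-{x}. if x' = mv x e then rt x e * (f x' - f x) else 0)" by (rule sum.swap)
  also have "\<dots> = (\<Sum>e\<in>E. if mv x e \<in> S - {x} then rt x e * (f (mv x e) - f x) else 0)"
    using assms(2) by (simp add: sum.delta')
  also have "\<dots> = (\<Sum>e\<in>E. rt x e * (f (mv x e) - f x))"
    using assms unfolding rep_def by (intro sum.cong refl) auto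
  finally show ?thesis .
qed

lemma rep_drift_stat:
  assumes "rep S q E mv rt" "finite S" "stationary S q p"
  shows "(\<Sum>x\<in>S. p x * (\<Sum>e\<in>E. rt x e * (f (mv x e) - f x))) = 0"
proof -
  have "(\<Sum>x\<in>S. p x * (\<Sum>e\<in>E. rt x e * (f (mv x e) - f x))) = (\<Sum>x\<in>S. p x * (\<Sum>y\<in>S-{x}. q x y * (f y - f x)))"
    using rep_drift[OF assms(1,2)] by simp
  also have "\<dots> = 0" using stat_drift[OF assms(2) stationary_balanced[OF assms(3)]] .
  finally show ?thesis .
qed

fun omv :: "('s \<Rightarrow> 'e \<Rightarrow> 's) \<Rightarrow> 's \<Rightarrow> 'e option \<Rightarrow> 's" where
  "omv mv x None = x" | "omv mv x (Some e) = mv x e"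

definition oset :: "'e set \<Rightarrow> 'e option set" where "oset E = insert None (Some ` E)"

lemma sum_oset: "finite E \<Longrightarrow> (\<Sum>i\<in>oset E. g i) = g None + (\<Sum>e\<in>E. g (Some e))"
  unfolding oset_def by (simp add: sum.reindex)

definition cq :: "'e set \<Rightarrow> ('s \<Rightarrow> 'e \<Rightarrow> 's) \<Rightarrow> ('t \<Rightarrow> 'e \<Rightarrow> 't) \<Rightarrow> ('s \<times> 't \<Rightarrow> 'e option \<Rightarrow> 'e option \<Rightarrow> real)
   \<Rightarrow> 's \<times> 't \<Rightarrow> 's \<times> 't \<Rightarrow> real" where
  "cq E mv1 mv2 w s s' = (\<Sum>i\<in>oset E. \<Sum>j\<in>oset E. if s' = (omv mv1 (fst s) i, omv mv2 (snd s) j) then w s i j else 0)"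

lemma cq_proj1:
  assumes fE: "finite E" and fR: "finite R"
    and wR: "\<forall>i\<in>oset E. \<forall>j\<in>oset E. w s i j \<noteq> 0 \<longrightarrow> (omv mv1 (fst s) i, omv mv2 (snd s) j) \<in> R"
    and row: "\<forall>e\<in>E. (\<Sum>j\<in>oset E. w s (Some e) j) = rt1 (fst s) e"
    and ne: "x' \<noteq> fst s"
  shows "(\<Sum>s'\<in>{s'\<in>R. fst s' = x'}. cq E mv1 mv2 w s s') = (\<Sum>e\<in>E. if x' = mv1 (fst s) e then rt1 (fst s) e else 0)"
proof -
  have fB: "finite {s'\<in>R. fst s' = x'}" using fR by auto
  have "(\<Sum>s'\<in>{s'\<in>R. fst s' = x'}. cq E mv1 mv2 w s s')
     = (\<Sum>i\<in>oset E. \<Sum>j\<in>oset E. \<Sum>s'\<in>{s'\<in>R. fst s' = x'}. if s' = (omv mv1 (fst s) i, omv mv2 (snd s) j) then w s i j else 0)"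
    unfolding cq_def by (subst sum.swap) (simp add: sum.swap[of _ "{s'\<in>R. fst s' = x'}"])
  also have "\<dots> = (\<Sum>i\<in>oset E. \<Sum>j\<in>oset E. if omv mv1 (fst s) i = x' then w s i j else 0)"
  proof (intro sum.cong refl)
    fix i j assume ij: "i \<in> oset E" "j \<in> oset E"
    show "(\<Sum>s'\<in>{s'\<in>R. fst s' = x'}. if s' = (omv mv1 (fst s) i, omv mv2 (snd s) j) then w s i j else 0)
        = (if omv mv1 (fst s) i = x' then w s i j else 0)"
      using wR ij fB by (cases "w s i j = 0") (auto simp: sum.delta')
  qed
  also have "\<dots> = (\<Sum>i\<in>oset E. if omv mv1 (fst s) i = x' then (\<Sum>j\<in>oset E. w s i j) else 0)"
    by (intro sum.cong refl) auto
  also have "\<dots> = (\<Sum>e\<in>E. if mv1 (fst s) e = x' then (\<Sum>j\<in>oset E. w s (Some e) j) else 0)"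
    by (subst sum_oset[OF fE]) (use ne in simp)
  also have "\<dots> = (\<Sum>e\<in>E. if x' = mv1 (fst s) e then rt1 (fst s) e else 0)"
    using row by (intro sum.cong refl) auto
  finally show ?thesis .
qed

lemma cq_proj2:
  assumes fE: "finite E" and fR: "finite R"
    and wR: "\<forall>i\<in>oset E. \<forall>j\<in>oset E. w s i j \<noteq> 0 \<longrightarrow> (omv mv1 (fst s) i, omv mv2 (snd s) j) \<in> R"
    and col: "\<forall>e\<in>E. (\<Sum>i\<in>oset E. w s i (Some e)) = rt2 (snd s) e"
    and ne: "y' \<noteq> snd s"
  shows "(\<Sum>s'\<in>{s'\<in>R. snd s' = y'}. cq E mv1 mv2 w s s') = (\<Sum>e\<in>E. if y' = mv2 (snd s) e then rt2 (snd s) e else 0)"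
proof -
  have fB: "finite {s'\<in>R. snd s' = y'}" using fR by auto
  have "(\<Sum>s'\<in>{s'\<in>R. snd s' = y'}. cq E mv1 mv2 w s s')
     = (\<Sum>i\<in>oset E. \<Sum>j\<in>oset E. \<Sum>s'\<in>{s'\<in>R. snd s' = y'}. if s' = (omv mv1 (fst s) i, omv mv2 (snd s) j) then w s i j else 0)"
    unfolding cq_def by (subst sum.swap) (simp add: sum.swap[of _ "{s'\<in>R. snd s' = y'}"])
  also have "\<dots> = (\<Sum>i\<in>oset E. \<Sum>j\<in>oset E. if omv mv2 (snd s) j = y' then w s i j else 0)"
  proof (intro sum.cong refl)
    fix i j assume ij: "i \<in> oset E" "j \<in> oset E"
    show "(\<Sum>s'\<in>{s'\<in>R. snd s' = y'}. if s' = (omv mv1 (fst s) i, omv mv2 (snd s) j) then w s i j else 0)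
        = (if omv mv2 (snd s) j = y' then w s i j else 0)"
      using wR ij fB by (cases "w s i j = 0") (auto simp: sum.delta')
  qed
  also have "\<dots> = (\<Sum>j\<in>oset E. if omv mv2 (snd s) j = y' then (\<Sum>i\<in>oset E. w s i j) else 0)"
    by (subst sum.swap) (rule sum.cong[OF refl], simp)
  also have "\<dots> = (\<Sum>e\<in>E. if mv2 (snd s) e = y' then (\<Sum>i\<in>oset E. w s i (Some e)) else 0)"
    by (subst sum_oset[OF fE]) (use ne in simp)
  also have "\<dots> = (\<Sum>e\<in>E. if y' = mv2 (snd s) e then rt2 (snd s) e else 0)"
    using col by (intro sum.cong refl) auto
  finally show ?thesis .
qed



definition apr :: "('e \<Rightarrow> real) \<Rightarrow> ('e \<Rightarrow> real) \<Rightarrow> ('e \<Rightarrow> bool) \<Rightarrow> 'e \<Rightarrow> real" where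
  "apr a b D i = a i - (if D i then b i else 0)"
definition Atot :: "'e set \<Rightarrow> ('e \<Rightarrow> real) \<Rightarrow> ('e \<Rightarrow> real) \<Rightarrow> ('e \<Rightarrow> bool) \<Rightarrow> real" where
  "Atot E a b D = (\<Sum>i\<in>E. apr a b D i)"
definition Btot :: "'e set \<Rightarrow> ('e \<Rightarrow> real) \<Rightarrow> ('e \<Rightarrow> bool) \<Rightarrow> real" where
  "Btot E b D = (\<Sum>j\<in>E. if D j then 0 else b j)"

fun pw :: "'e set \<Rightarrow> ('e \<Rightarrow> real) \<Rightarrow> ('e \<Rightarrow> real) \<Rightarrow> ('e \<Rightarrow> bool) \<Rightarrow> bool \<Rightarrow> 'e option \<Rightarrow> 'e option \<Rightarrow> real" where
  "pw E a b D t (Some i) (Some j) = (if i = j \<and> D j then b j else 0)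
      + (if \<not> D j \<and> t then b j * apr a b D i / Atot E a b D else 0)"
| "pw E a b D t (Some i) None = (if t then apr a b D i * (1 - Btot E b D / Atot E a b D) else apr a b D i)"
| "pw E a b D t None (Some j) = (if \<not> D j \<and> \<not> t then b j else 0)"
| "pw E a b D t None None = 0"

context
  fixes E :: "'e set" and a b :: "'e \<Rightarrow> real" and D :: "'e \<Rightarrow> bool" and t :: bool
  assumes fE: "finite E" and ann: "\<forall>e\<in>E. a e \<ge> 0" and bnn: "\<forall>e\<in>E. b e \<ge> 0"
    and Dle: "\<forall>e\<in>E. D e \<longrightarrow> b e \<le> a e" and tot: "t \<longrightarrow> (\<Sum>e\<in>E. b e) \<le> (\<Sum>e\<in>E. a e)"
begin

lemma apr_nn: "i \<in> E \<Longrightarrow> apr a b D i \<ge> 0"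
  using ann Dle unfolding apr_def by auto

lemma AB: "Atot E a b D - Btot E b D = (\<Sum>e\<in>E. a e) - (\<Sum>e\<in>E. b e)"
proof -
  have "(\<Sum>e\<in>E. b e) = (\<Sum>e\<in>E. if D e then b e else 0) + Btot E b D"
    unfolding Btot_def by (simp add: sum.distrib[symmetric] if_distrib cong: if_cong)
  then show ?thesis unfolding Atot_def apr_def by (simp add: sum_subtractf)
qed

lemma Atot_nn: "Atot E a b D \<ge> 0" unfolding Atot_def using apr_nn by (intro sum_nonneg) auto
lemma Btot_nn: "Btot E b D \<ge> 0" unfolding Btot_def using bnn by (intro sum_nonneg) auto

lemma BleA: "t \<Longrightarrow> Btot E b D \<le> Atot E a b D" using AB tot by simp

lemma pw_nonneg: "i \<in> oset E \<Longrightarrow> j \<in> oset E \<Longrightarrow> pw E a b D t i j \<ge> 0"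
proof (cases i; cases j)
  fix i' j' assume "i \<in> oset E" "j \<in> oset E" "i = Some i'" "j = Some j'"
  then have "i' \<in> E" "j' \<in> E" unfolding oset_def by auto
  then show ?thesis using \<open>i = Some i'\<close> \<open>j = Some j'\<close> bnn apr_nn Atot_nn
    by (auto intro!: add_nonneg_nonneg divide_nonneg_nonneg mult_nonneg_nonneg)
next
  fix i' assume "i \<in> oset E" "i = Some i'" "j = None"
  then have i': "i' \<in> E" unfolding oset_def by auto
  show ?thesis
  proof (cases t)
    case True
    have "Btot E b D / Atot E a b D \<le> 1" using BleA[OF True] Atot_nn Btot_nn
      by (cases "Atot E a b D = 0") (auto simp: divide_le_eq_1)
    then show ?thesis using True \<open>i = Some i'\<close> \<open>j = None\<close> apr_nn[OF i'] by simp
  next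
    case False then show ?thesis using \<open>i = Some i'\<close> \<open>j = None\<close> apr_nn[OF i'] by simp
  qed
qed (auto simp: oset_def bnn)

lemma pw_row: "e \<in> E \<Longrightarrow> (\<Sum>j\<in>oset E. pw E a b D t (Some e) j) = a e"
proof -
  assume e: "e \<in> E"
  have s: "(\<Sum>j\<in>E. pw E a b D t (Some e) (Some j)) = (if D e then b e else 0)
      + (if t then apr a b D e * Btot E b D / Atot E a b D else 0)"
  proof -
    have "(\<Sum>j\<in>E. pw E a b D t (Some e) (Some j)) = (\<Sum>j\<in>E. if e = j \<and> D j then b j else 0)
       + (\<Sum>j\<in>E. if \<not> D j \<and> t then b j * apr a b D e / Atot E a b D else 0)"
      by (simp add: sum.distrib)
    also have "(\<Sum>j\<in>E. if e = j \<and> D j then b j else 0) = (\<Sum>j\<in>E. if e = j then (if D e then b e else 0) else 0)"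
      by (intro sum.cong) auto
    also have "\<dots> = (if D e then b e else 0)" using fE e by (simp add: sum.delta)
    also have "(\<Sum>j\<in>E. if \<not> D j \<and> t then b j * apr a b D e / Atot E a b D else 0)
        = (if t then apr a b D e * Btot E b D / Atot E a b D else 0)"
      unfolding Btot_def by (cases t) (auto simp: sum_divide_distrib sum_distrib_left if_distrib mult.commute intro!: sum.cong)
    finally show ?thesis .
  qed
  have "(\<Sum>j\<in>oset E. pw E a b D t (Some e) j) = pw E a b D t (Some e) None + (\<Sum>j\<in>E. pw E a b D t (Some e) (Some j))"
    by (rule sum_oset[OF fE])
  also have "\<dots> = apr a b D e + (if D e then b e else 0)"
    unfolding s by (cases t) (simp_all add: algebra_simps)
  also have "\<dots> = a e" unfolding apr_def by simp
  finally show ?thesis .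
qed

lemma pw_col: "e \<in> E \<Longrightarrow> (\<Sum>i\<in>oset E. pw E a b D t i (Some e)) = b e"
proof -
  assume e: "e \<in> E"
  have "(\<Sum>i\<in>E. pw E a b D t (Some i) (Some e)) = (\<Sum>i\<in>E. if i = e \<and> D e then b e else 0)
       + (\<Sum>i\<in>E. if \<not> D e \<and> t then b e * apr a b D i / Atot E a b D else 0)"
    by (simp add: sum.distrib)
  also have "(\<Sum>i\<in>E. if i = e \<and> D e then b e else 0) = (if D e then b e else 0)"
    using fE e by (cases "D e") (auto simp: sum.delta)
  also have "(\<Sum>i\<in>E. if \<not> D e \<and> t then b e * apr a b D i / Atot E a b D else 0)
     = (if \<not> D e \<and> t then b e * Atot E a b D / Atot E a b D else 0)"
    unfolding Atot_def by (auto simp: sum_divide_distrib sum_distrib_left)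
  finally have s: "(\<Sum>i\<in>E. pw E a b D t (Some i) (Some e)) = (if D e then b e else 0) + (if \<not> D e \<and> t then b e * Atot E a b D / Atot E a b D else 0)" .
  have bz: "b e = 0" if "\<not> D e" "t" "Atot E a b D = 0"
  proof -
    have b0: "(\<Sum>j\<in>E. if D j then 0 else b j) = 0" using BleA[OF that(2)] Btot_nn that(3) unfolding Btot_def by simp
    have nn: "\<forall>j\<in>E. (if D j then 0 else b j) \<ge> 0" using bnn by auto
    have "(if D e then 0 else b e) = 0" by (rule sum_nn_zero[OF fE nn b0 e])
    then show ?thesis using that(1) by simp
  qed
  show ?thesis using fE s bz by (auto simp: sum_oset)
qed

end

lemma pw_nz:
  "pw E a b D t (Some i) (Some j) \<noteq> 0 \<Longrightarrow> (i = j \<and> D j \<and> b j \<noteq> 0) \<or> (\<not> D j \<and> t \<and> b j \<noteq> 0 \<and> apr a b D i \<noteq> 0)"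
  "pw E a b D t (Some i) None \<noteq> 0 \<Longrightarrow> apr a b D i \<noteq> 0"
  "pw E a b D t None (Some j) \<noteq> 0 \<Longrightarrow> \<not> D j \<and> \<not> t \<and> b j \<noteq> 0"
  "pw E a b D t None None = 0"
  by (auto split: if_splits)


lemma finite_prod_subset: "finite S1 \<Longrightarrow> finite S2 \<Longrightarrow> R \<subseteq> S1 \<times> S2 \<Longrightarrow> finite R"
  using finite_subset by blast

lemma coupling_thm:
  fixes R :: "('s \<times> 't) set"
  assumes rep1: "rep S1 q1 E mv1 rt1" and rep2: "rep S2 q2 E mv2 rt2"
    and fS1: "finite S1" and fS2: "finite S2" and RS: "R \<subseteq> S1 \<times> S2" and Rne: "R \<noteq> {}"
    and H1: "\<forall>s\<in>R. \<forall>e\<in>E. D s e \<longrightarrow> rt2 (snd s) e \<le> rt1 (fst s) e"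
    and H2: "\<forall>s\<in>R. tg s \<longrightarrow> (\<Sum>e\<in>E. rt2 (snd s) e) \<le> (\<Sum>e\<in>E. rt1 (fst s) e)"
    and V1: "\<forall>s\<in>R. \<forall>j\<in>E. D s j \<longrightarrow> rt2 (snd s) j \<noteq> 0 \<longrightarrow> (mv1 (fst s) j, mv2 (snd s) j) \<in> R"
    and V2: "\<forall>s\<in>R. \<forall>i\<in>E. \<forall>j\<in>E. \<not> D s j \<longrightarrow> tg s \<longrightarrow> rt2 (snd s) j \<noteq> 0 \<longrightarrow>
              apr (rt1 (fst s)) (rt2 (snd s)) (D s) i \<noteq> 0 \<longrightarrow> (mv1 (fst s) i, mv2 (snd s) j) \<in> R"
    and V3: "\<forall>s\<in>R. \<forall>i\<in>E. apr (rt1 (fst s)) (rt2 (snd s)) (D s) i \<noteq> 0 \<longrightarrow> (mv1 (fst s) i, snd s) \<in> R"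
    and V4: "\<forall>s\<in>R. \<forall>j\<in>E. \<not> D s j \<longrightarrow> \<not> tg s \<longrightarrow> rt2 (snd s) j \<noteq> 0 \<longrightarrow> (fst s, mv2 (snd s) j) \<in> R"
  shows "\<exists>\<rho>. stationary R (cq E mv1 mv2 (\<lambda>s. pw E (rt1 (fst s)) (rt2 (snd s)) (D s) (tg s))) \<rho>
     \<and> stationary S1 q1 (\<lambda>x. \<Sum>s\<in>{s\<in>R. fst s = x}. \<rho> s)
     \<and> stationary S2 q2 (\<lambda>y. \<Sum>s\<in>{s\<in>R. snd s = y}. \<rho> s)"
proof -
  define W where "W = (\<lambda>s. pw E (rt1 (fst s)) (rt2 (snd s)) (D s) (tg s))"
  have fE: "finite E" using rep1 unfolding rep_def by auto
  have fR: "finite R" using finite_prod_subset[OF fS1 fS2 RS] .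
  have rnn1: "\<forall>e\<in>E. rt1 (fst s) e \<ge> 0" if "s \<in> R" for s
  proof -
    have "fst s \<in> S1" using that RS by auto
    then show ?thesis using rep1 unfolding rep_def by blast
  qed
  have rnn2: "\<forall>e\<in>E. rt2 (snd s) e \<ge> 0" if "s \<in> R" for s
  proof -
    have "snd s \<in> S2" using that RS by auto
    then show ?thesis using rep2 unfolding rep_def by blast
  qed
  have Wnn: "W s i j \<ge> 0" if "s \<in> R" "i \<in> oset E" "j \<in> oset E" for s i j
    unfolding W_def
    by (rule pw_nonneg[OF fE rnn1[OF that(1)] rnn2[OF that(1)] bspec[OF H1 that(1)] bspec[OF H2 that(1)] that(2,3)])
  have WR: "\<forall>i\<in>oset E. \<forall>j\<in>oset E. W s i j \<noteq> 0 \<longrightarrow> (omv mv1 (fst s) i, omv mv2 (snd s) j) \<in> R" if s: "s \<in> R" for s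
  proof (intro ballI impI)
    fix i j assume ij: "i \<in> oset E" "j \<in> oset E" and nz: "W s i j \<noteq> 0"
    show "(omv mv1 (fst s) i, omv mv2 (snd s) j) \<in> R"
    proof (cases i; cases j)
      fix i' j' assume c: "i = Some i'" "j = Some j'"
      then have i'E: "i' \<in> E" and j'E: "j' \<in> E" using ij unfolding oset_def by auto
      have "pw E (rt1 (fst s)) (rt2 (snd s)) (D s) (tg s) (Some i') (Some j') \<noteq> 0" using nz c unfolding W_def by simp
      from pw_nz(1)[OF this] show ?thesis
      proof (elim disjE conjE)
        assume "i' = j'" "D s j'" "rt2 (snd s) j' \<noteq> 0"
        then show ?thesis using V1 s j'E c by simp
      next
        assume "\<not> D s j'" "tg s" "rt2 (snd s) j' \<noteq> 0" "apr (rt1 (fst s)) (rt2 (snd s)) (D s) i' \<noteq> 0"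
        then show ?thesis using V2 s i'E j'E c by simp
      qed
    next
      fix i' assume c: "i = Some i'" "j = None"
      then have i'E: "i' \<in> E" using ij unfolding oset_def by auto
      have "pw E (rt1 (fst s)) (rt2 (snd s)) (D s) (tg s) (Some i') None \<noteq> 0" using nz c unfolding W_def by simp
      from pw_nz(2)[OF this] show ?thesis using V3 s i'E c by simp
    next
      fix j' assume c: "i = None" "j = Some j'"
      then have j'E: "j' \<in> E" using ij unfolding oset_def by auto
      have "pw E (rt1 (fst s)) (rt2 (snd s)) (D s) (tg s) None (Some j') \<noteq> 0" using nz c unfolding W_def by simp
      from pw_nz(3)[OF this] show ?thesis using V4 s j'E c by simp
    next
      assume c: "i = None" "j = None"
      then show ?thesis using nz unfolding W_def by simp
    qed
  qed
  have cqnn: "\<forall>x\<in>R. \<forall>y\<in>R. x \<noteq> y \<longrightarrow> cq E mv1 mv2 W x y \<ge> 0"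
    unfolding cq_def using Wnn by (intro ballI impI sum_nonneg) simp
  obtain \<rho> where st: "stationary R (cq E mv1 mv2 W) \<rho>"
    using stat_exists[OF fR Rne cqnn] by blast
  have row: "\<forall>e\<in>E. (\<Sum>j\<in>oset E. W s (Some e) j) = rt1 (fst s) e" if "s \<in> R" for s
    unfolding W_def using pw_row[OF fE rnn1[OF that(1)] rnn2[OF that(1)] bspec[OF H1 that(1)] bspec[OF H2 that(1)]] by blast
  have col: "\<forall>e\<in>E. (\<Sum>i\<in>oset E. W s i (Some e)) = rt2 (snd s) e" if "s \<in> R" for s
    unfolding W_def using pw_col[OF fE rnn1[OF that(1)] rnn2[OF that(1)] bspec[OF H1 that(1)] bspec[OF H2 that(1)]] by blast
  have m1: "stationary S1 q1 (\<lambda>x. \<Sum>s\<in>{s\<in>R. fst s = x}. \<rho> s)"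
  proof (rule marginal_stationary[OF fR fS1 _ st])
    show "fst ` R \<subseteq> S1" using RS by auto
    show "\<forall>s\<in>R. \<forall>x'\<in>S1. x' \<noteq> fst s \<longrightarrow> (\<Sum>s'\<in>{s'\<in>R. fst s' = x'}. cq E mv1 mv2 W s s') = q1 (fst s) x'"
    proof (intro ballI impI)
      fix s x' assume s: "s \<in> R" and x': "x' \<in> S1" "x' \<noteq> fst s"
      have "fst s \<in> S1" using s RS by auto
      then show "(\<Sum>s'\<in>{s'\<in>R. fst s' = x'}. cq E mv1 mv2 W s s') = q1 (fst s) x'"
        using cq_proj1[of E R W s mv1 mv2 rt1 x', OF fE fR WR[OF s] row[OF s] x'(2)] rep1 x'(2) unfolding rep_def by auto
    qed
  qed
  have m2: "stationary S2 q2 (\<lambda>y. \<Sum>s\<in>{s\<in>R. snd s = y}. \<rho> s)"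
  proof (rule marginal_stationary[OF fR fS2 _ st])
    show "snd ` R \<subseteq> S2" using RS by auto
    show "\<forall>s\<in>R. \<forall>x'\<in>S2. x' \<noteq> snd s \<longrightarrow> (\<Sum>s'\<in>{s'\<in>R. snd s' = x'}. cq E mv1 mv2 W s s') = q2 (snd s) x'"
    proof (intro ballI impI)
      fix s x' assume s: "s \<in> R" and x': "x' \<in> S2" "x' \<noteq> snd s"
      have "snd s \<in> S2" using s RS by auto
      then show "(\<Sum>s'\<in>{s'\<in>R. snd s' = x'}. cq E mv1 mv2 W s s') = q2 (snd s) x'"
        using cq_proj2[of E R W s mv1 mv2 rt2 x', OF fE fR WR[OF s] col[OF s] x'(2)] rep2 x'(2) unfolding rep_def by auto
    qed
  qed
  show ?thesis using st m1 m2 unfolding W_def by blast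
qed



lemma sum_upd: "k < (K::nat) \<Longrightarrow> (\<Sum>l<K. (f(k := v)) l) + f k = (\<Sum>l<K. f l) + (v::nat)"
proof -
  assume k: "k < K"
  have r: "(\<Sum>l<K. g l) = g k + (\<Sum>l\<in>{..<K}-{k}. g l)" for g :: "nat \<Rightarrow> nat"
    by (rule sum.remove) (use k in auto)
  have c: "(\<Sum>l\<in>{..<K}-{k}. (f(k:=v)) l) = (\<Sum>l\<in>{..<K}-{k}. f l)" by (rule sum.cong) auto
  have "(\<Sum>l<K. (f(k := v)) l) = v + (\<Sum>l\<in>{..<K}-{k}. f l)"
    using r[of "f(k:=v)"] c by simp
  moreover have "(\<Sum>l<K. f l) = f k + (\<Sum>l\<in>{..<K}-{k}. f l)" by (rule r)
  ultimately show ?thesis by simp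
qed

lemma size_st_alt: "size_st K x = (\<Sum>l<K. fst x l) + (\<Sum>l<K. snd x l)"
  unfolding size_st_def by (simp add: sum.distrib)

lemma size_add1: "k < K \<Longrightarrow> size_st K (add1 x k) = size_st K x + 1"
proof -
  assume k: "k < K"
  have h: "(\<Sum>l<K. ((fst x)(k := fst x k + 1)) l) + fst x k = (\<Sum>l<K. fst x l) + (fst x k + 1)" by (rule sum_upd[OF k])
  have "size_st K (add1 x k) = (\<Sum>l<K. ((fst x)(k := fst x k + 1)) l) + (\<Sum>l<K. snd x l)"
    by (simp only: size_st_alt add1_def fst_conv snd_conv)
  then show ?thesis using h unfolding size_st_alt by linarith
qed
lemma size_add2: "k < K \<Longrightarrow> size_st K (add2 x k) = size_st K x + 1"
proof -
  assume k: "k < K"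
  have h: "(\<Sum>l<K. ((snd x)(k := snd x k + 1)) l) + snd x k = (\<Sum>l<K. snd x l) + (snd x k + 1)" by (rule sum_upd[OF k])
  have "size_st K (add2 x k) = (\<Sum>l<K. fst x l) + (\<Sum>l<K. ((snd x)(k := snd x k + 1)) l)"
    by (simp only: size_st_alt add2_def fst_conv snd_conv)
  then show ?thesis using h unfolding size_st_alt by linarith
qed
lemma size_sub1: "k < K \<Longrightarrow> fst x k > 0 \<Longrightarrow> size_st K (sub1 x k) + 1 = size_st K x"
proof -
  assume k: "k < K" and p: "fst x k > 0"
  have h: "(\<Sum>l<K. ((fst x)(k := fst x k - 1)) l) + fst x k = (\<Sum>l<K. fst x l) + (fst x k - 1)" by (rule sum_upd[OF k])
  have "size_st K (sub1 x k) = (\<Sum>l<K. ((fst x)(k := fst x k - 1)) l) + (\<Sum>l<K. snd x l)"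
    by (simp only: size_st_alt sub1_def fst_conv snd_conv)
  then show ?thesis using h p unfolding size_st_alt by linarith
qed
lemma size_sub2: "k < K \<Longrightarrow> snd x k > 0 \<Longrightarrow> size_st K (sub2 x k) + 1 = size_st K x"
proof -
  assume k: "k < K" and p: "snd x k > 0"
  have h: "(\<Sum>l<K. ((snd x)(k := snd x k - 1)) l) + snd x k = (\<Sum>l<K. snd x l) + (snd x k - 1)" by (rule sum_upd[OF k])
  have "size_st K (sub2 x k) = (\<Sum>l<K. fst x l) + (\<Sum>l<K. ((snd x)(k := snd x k - 1)) l)"
    by (simp only: size_st_alt sub2_def fst_conv snd_conv)
  then show ?thesis using h p unfolding size_st_alt by linarith
qed
lemma sum2_add2: "k < K \<Longrightarrow> (\<Sum>l<K. snd (add2 x k) l) = (\<Sum>l<K. snd x l) + 1"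
proof -
  assume k: "k < K"
  have h: "(\<Sum>l<K. ((snd x)(k := snd x k + 1)) l) + snd x k = (\<Sum>l<K. snd x l) + (snd x k + 1)" by (rule sum_upd[OF k])
  have "(\<Sum>l<K. snd (add2 x k) l) = (\<Sum>l<K. ((snd x)(k := snd x k + 1)) l)"
    by (simp only: add2_def fst_conv snd_conv)
  then show ?thesis using h by linarith
qed
lemma sum2_sub2: "k < K \<Longrightarrow> (\<Sum>l<K. snd (sub2 x k) l) \<le> (\<Sum>l<K. snd x l)"
proof -
  assume k: "k < K"
  have h: "(\<Sum>l<K. ((snd x)(k := snd x k - 1)) l) + snd x k = (\<Sum>l<K. snd x l) + (snd x k - 1)" by (rule sum_upd[OF k])
  have "(\<Sum>l<K. snd (sub2 x k) l) = (\<Sum>l<K. ((snd x)(k := snd x k - 1)) l)"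
    by (simp only: sub2_def fst_conv snd_conv)
  then show ?thesis using h by linarith
qed

lemma sub1_id: "fst x k = 0 \<Longrightarrow> sub1 x k = x" unfolding sub1_def by (cases x) auto
lemma sub2_id: "snd x k = 0 \<Longrightarrow> sub2 x k = x" unfolding sub2_def by (cases x) auto

lemma fst_add1[simp]: "fst (add1 x k) = (fst x)(k := fst x k + 1)" and snd_add1[simp]: "snd (add1 x k) = snd x"
  and fst_add2[simp]: "fst (add2 x k) = fst x" and snd_add2[simp]: "snd (add2 x k) = (snd x)(k := snd x k + 1)"
  and fst_sub1[simp]: "fst (sub1 x k) = (fst x)(k := fst x k - 1)" and snd_sub1[simp]: "snd (sub1 x k) = snd x"
  and fst_sub2[simp]: "fst (sub2 x k) = fst x" and snd_sub2[simp]: "snd (sub2 x k) = (snd x)(k := snd x k - 1)"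
  by (auto simp: add1_def add2_def sub1_def sub2_def)

lemma ss_iff: "x \<in> state_space K m n \<longleftrightarrow>
  (\<forall>k<K. fst x k \<le> m k) \<and> (\<forall>k\<ge>K. fst x k = 0 \<and> snd x k = 0) \<and> (\<Sum>k<K. snd x k) \<le> n"
  unfolding state_space_def by (cases x) auto

lemma ss_sub1: "x \<in> state_space K m n \<Longrightarrow> sub1 x k \<in> state_space K m n"
  unfolding ss_iff by auto
lemma ss_sub2: "x \<in> state_space K m n \<Longrightarrow> k < K \<Longrightarrow> sub2 x k \<in> state_space K m n"
  unfolding ss_iff using sum2_sub2[of k K x] by auto
lemma ss_add1: "x \<in> state_space K m n \<Longrightarrow> k < K \<Longrightarrow> fst x k < m k \<Longrightarrow> add1 x k \<in> state_space K m n"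
  unfolding ss_iff by auto
lemma ss_add2: "x \<in> state_space K m n \<Longrightarrow> k < K \<Longrightarrow> (\<Sum>l<K. snd x l) < n \<Longrightarrow> add2 x k \<in> state_space K m n"
  unfolding ss_iff using sum2_add2[of k K x] by auto

lemma finite_ss: "finite (state_space K m n)"
proof -
  define N where "N = (\<Sum>k<K. m k) + n"
  define F where "F = {f::nat\<Rightarrow>nat. \<forall>x. (x \<in> {..<K} \<longrightarrow> f x \<in> {0..N}) \<and> (x \<notin> {..<K} \<longrightarrow> f x = 0)}"
  have fF: "finite F" unfolding F_def by (rule finite_set_of_finite_funs) auto
  have "state_space K m n \<subseteq> F \<times> F"
  proof
    fix x assume x: "x \<in> state_space K m n"
    have a: "fst x k \<le> N" if "k < K" for k
    proof -
      have "m k \<le> (\<Sum>k<K. m k)" using that by (intro member_le_sum) auto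
      moreover have "fst x k \<le> m k" using x that unfolding ss_iff by blast
      ultimately show ?thesis unfolding N_def by linarith
    qed
    have b: "snd x k \<le> N" if "k < K" for k
    proof -
      have "snd x k \<le> (\<Sum>k<K. snd x k)" using that by (intro member_le_sum) auto
      moreover have "(\<Sum>k<K. snd x k) \<le> n" using x unfolding ss_iff by blast
      ultimately show ?thesis unfolding N_def by linarith
    qed
    have c: "\<forall>k\<ge>K. fst x k = 0 \<and> snd x k = 0" using x unfolding ss_iff by blast
    have "fst x \<in> F" unfolding F_def using a c by (auto simp: not_less)
    moreover have "snd x \<in> F" unfolding F_def using b c by (auto simp: not_less)
    ultimately show "x \<in> F \<times> F" by (simp add: mem_Times_iff)
  qed
  then show ?thesis using fF finite_subset by blast
qed

definition z0 :: state where "z0 = (\<lambda>_. 0, \<lambda>_. 0)"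

lemma z0_ss: "z0 \<in> state_space K m n" unfolding ss_iff z0_def by simp

lemma not_z0: "x \<in> state_space K m n \<Longrightarrow> x \<noteq> z0 \<Longrightarrow> \<exists>k<K. fst x k > 0 \<or> snd x k > 0"
proof (rule ccontr)
  assume x: "x \<in> state_space K m n" "x \<noteq> z0" "\<not> (\<exists>k<K. fst x k > 0 \<or> snd x k > 0)"
  then have "fst x = (\<lambda>_. 0)" "snd x = (\<lambda>_. 0)" unfolding ss_iff
    by (auto simp: fun_eq_iff) (meson not_less)+
  then have "x = z0" unfolding z0_def by (cases x) auto
  then show False using x by simp
qed

definition EV :: "nat \<Rightarrow> (nat \<times> nat) set" where "EV K = {..<K} \<times> {0,1,2}"

lemma finite_EV: "finite (EV K)" unfolding EV_def by auto

definition arr :: "nat \<Rightarrow> (nat \<Rightarrow> nat) \<Rightarrow> nat \<Rightarrow> state \<Rightarrow> nat \<Rightarrow> state" where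
  "arr K m n x k = (if fst x k < m k then add1 x k
      else if fst x k = m k \<and> (\<Sum>l<K. snd x l) < n then add2 x k else x)"

fun lmv :: "nat \<Rightarrow> (nat \<Rightarrow> nat) \<Rightarrow> nat \<Rightarrow> state \<Rightarrow> nat \<times> nat \<Rightarrow> state" where
  "lmv K m n x (k, t) = (if t = 0 then arr K m n x k else if t = 1 then sub1 x k else sub2 x k)"
fun lrt :: "(nat \<Rightarrow> real) \<Rightarrow> (nat \<Rightarrow> real) \<Rightarrow> state \<Rightarrow> nat \<times> nat \<Rightarrow> real" where
  "lrt lam mu x (k, t) = (if t = 0 then lam k else if t = 1 then mu k * real (fst x k) else mu k * real (snd x k))"
fun mmv :: "nat \<Rightarrow> (nat \<Rightarrow> nat) \<Rightarrow> nat \<Rightarrow> state \<Rightarrow> nat \<times> nat \<Rightarrow> state" where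
  "mmv K m n x (k, t) = (if t = 0 then arr K m n x k else if snd x k = 0 then sub1 x k else sub2 x k)"
fun mrt :: "(nat \<Rightarrow> real) \<Rightarrow> (nat \<Rightarrow> real) \<Rightarrow> state \<Rightarrow> nat \<times> nat \<Rightarrow> real" where
  "mrt lam mu x (k, t) = (if t = 0 then lam k else if t = 1 then mu k * real (fst x k + snd x k) else 0)"

lemma ss_arr: "x \<in> state_space K m n \<Longrightarrow> k < K \<Longrightarrow> arr K m n x k \<in> state_space K m n"
  unfolding arr_def using ss_add1 ss_add2 by auto

lemma sum_EV: "(\<Sum>e\<in>EV K. g e) = (\<Sum>k<K. g (k,0) + g (k,1) + g (k,2))"
proof -
  have i: "(\<Sum>t\<in>{0,1,2::nat}. g (k,t)) = g (k,0) + g (k,1) + g (k,2)" for k by (simp add: add.assoc)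
  have e: "(\<Sum>k<K. \<Sum>t\<in>{0,1,2::nat}. g (k,t)) = sum g ({..<K} \<times> {0,1,2})"
    by (subst sum.cartesian_product) (simp only: case_prod_eta)
  show ?thesis unfolding EV_def e[symmetric] i ..
qed

lemma add1_ne: "add1 x k \<noteq> x" unfolding add1_def by (cases x) (auto simp: fun_eq_iff)
lemma add2_ne: "add2 x k \<noteq> x" unfolding add2_def by (cases x) (auto simp: fun_eq_iff)

lemma arr_term: "x' \<noteq> x \<Longrightarrow>
   (if x' = add1 x k \<and> fst x k < m k then lam k else 0)
 + (if x' = add2 x k \<and> fst x k = m k \<and> (\<Sum>l<K. snd x l) < n then lam k else 0)
 = (if x' = arr K m n x k then lam k else (0::real))"
  unfolding arr_def by auto

lemma rep_loss:
  assumes "\<forall>k<K. lam k \<ge> 0" "\<forall>k<K. mu k \<ge> 0"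
  shows "rep (state_space K m n) (loss_rate K m n lam mu) (EV K) (lmv K m n) (lrt lam mu)"
  unfolding rep_def
proof (intro conjI ballI allI impI)
  show "finite (EV K)" by (rule finite_EV)
  fix x e assume x: "x \<in> state_space K m n" and e: "e \<in> EV K"
  obtain k t where kt: "e = (k,t)" "k < K" "t \<in> {0,1,2}" using e unfolding EV_def by auto
  show "0 \<le> lrt lam mu x e" using assms kt by auto
  show "lmv K m n x e \<in> state_space K m n" using kt x ss_arr ss_sub1 ss_sub2 by auto
next
  fix x x' assume x: "x \<in> state_space K m n" and ne: "x' \<noteq> x"
  show "loss_rate K m n lam mu x x' = (\<Sum>e\<in>EV K. if x' = lmv K m n x e then lrt lam mu x e else 0)"
    unfolding loss_rate_def sum_EV
  proof (intro sum.cong refl)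
    fix k
    show "(if x' = add1 x k \<and> fst x k < m k then lam k else 0) +
        (if x' = add2 x k \<and> fst x k = m k \<and> (\<Sum>l<K. snd x l) < n then lam k else 0) +
        (if x' = sub1 x k then mu k * real (fst x k) else 0) +
        (if x' = sub2 x k then mu k * real (snd x k) else 0)
      = (if x' = lmv K m n x (k, 0) then lrt lam mu x (k, 0) else 0) +
        (if x' = lmv K m n x (k, 1) then lrt lam mu x (k, 1) else 0) +
        (if x' = lmv K m n x (k, 2) then lrt lam mu x (k, 2) else 0)"
      using arr_term[OF ne, of k m lam K n] by simp
  qed
qed

lemma rep_mp:
  assumes "\<forall>k<K. lam k \<ge> 0" "\<forall>k<K. mu k \<ge> 0"
  shows "rep (state_space K m n) (mp_rate K m n lam mu) (EV K) (mmv K m n) (mrt lam mu)"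
  unfolding rep_def
proof (intro conjI ballI allI impI)
  show "finite (EV K)" by (rule finite_EV)
  fix x e assume x: "x \<in> state_space K m n" and e: "e \<in> EV K"
  obtain k t where kt: "e = (k,t)" "k < K" "t \<in> {0,1,2}" using e unfolding EV_def by auto
  show "0 \<le> mrt lam mu x e" using assms kt by auto
  show "mmv K m n x e \<in> state_space K m n" using kt x ss_arr ss_sub1 ss_sub2 by auto
next
  fix x x' assume x: "x \<in> state_space K m n" and ne: "x' \<noteq> x"
  show "mp_rate K m n lam mu x x' = (\<Sum>e\<in>EV K. if x' = mmv K m n x e then mrt lam mu x e else 0)"
    unfolding mp_rate_def sum_EV
  proof (intro sum.cong refl)
    fix k
    have d: "(if x' = sub1 x k \<and> snd x k = 0 then mu k * real (fst x k) else 0) +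
      (if x' = sub2 x k then (if 0 < snd x k then mu k * real (fst x k) else 0) + mu k * real (snd x k) else 0)
      = (if x' = (if snd x k = 0 then sub1 x k else sub2 x k) then mu k * real (fst x k + snd x k) else 0)"
      using ne sub2_id[of x k] by (auto simp: algebra_simps)
    show "(if x' = add1 x k \<and> fst x k < m k then lam k else 0) +
        (if x' = add2 x k \<and> fst x k = m k \<and> (\<Sum>l<K. snd x l) < n then lam k else 0) +
        (if x' = sub1 x k \<and> snd x k = 0 then mu k * real (fst x k) else 0) +
        (if x' = sub2 x k then (if 0 < snd x k then mu k * real (fst x k) else 0) + mu k * real (snd x k) else 0)
      = (if x' = mmv K m n x (k, 0) then mrt lam mu x (k, 0) else 0) +
        (if x' = mmv K m n x (k, 1) then mrt lam mu x (k, 1) else 0) +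
        (if x' = mmv K m n x (k, 2) then mrt lam mu x (k, 2) else 0)"
      using arr_term[OF ne, of k m lam K n] d by (simp add: distrib_left)
  qed
qed

lemma reach_descent:
  fixes f :: "'s \<Rightarrow> nat"
  assumes rp: "rep S q E mv rt" and desc: "\<forall>x\<in>S. x \<noteq> z \<longrightarrow> (\<exists>e\<in>E. rt x e > 0 \<and> f (mv x e) < f x)"
  shows "x \<in> S \<Longrightarrow> reach S q x z"
proof (induction "f x" arbitrary: x rule: less_induct)
  case less
  show ?case
  proof (cases "x = z")
    case True then show ?thesis by (simp add: reach.rrefl)
  next
    case False
    then obtain e where e: "e \<in> E" "rt x e > 0" "f (mv x e) < f x" using desc less.prems by blast
    have fE: "finite E" and mvS: "mv x e \<in> S" and rnn: "\<forall>e\<in>E. rt x e \<ge> 0"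
      using rp e less.prems unfolding rep_def by auto
    have ne: "mv x e \<noteq> x" using e(3) by auto
    have "q x (mv x e) = (\<Sum>e'\<in>E. if mv x e = mv x e' then rt x e' else 0)"
      using rp less.prems ne unfolding rep_def by auto
    also have "\<dots> \<ge> rt x e"
      using member_le_sum[of e E "\<lambda>e'. if mv x e = mv x e' then rt x e' else 0"] e fE rnn by auto
    finally have "q x (mv x e) > 0" using e(2) by linarith
    then show ?thesis using reach.rstep[OF less.prems mvS ne[symmetric]] less.hyps[OF e(3) mvS] by simp
  qed
qed

lemma reach_loss:
  assumes "\<forall>k<K. lam k \<ge> 0" "\<forall>k<K. mu k > 0"
  shows "\<forall>x\<in>state_space K m n. reach (state_space K m n) (loss_rate K m n lam mu) x z0"
proof
  fix x assume x: "x \<in> state_space K m n"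
  have rp: "rep (state_space K m n) (loss_rate K m n lam mu) (EV K) (lmv K m n) (lrt lam mu)"
    using assms by (intro rep_loss) (auto simp: less_imp_le)
  show "reach (state_space K m n) (loss_rate K m n lam mu) x z0"
  proof (rule reach_descent[OF rp _ x, where f="size_st K"], intro ballI impI)
    fix y assume y: "y \<in> state_space K m n" "y \<noteq> z0"
    then obtain k where k: "k < K" "fst y k > 0 \<or> snd y k > 0" using not_z0 by blast
    show "\<exists>e\<in>EV K. 0 < lrt lam mu y e \<and> size_st K (lmv K m n y e) < size_st K y"
    proof (cases "fst y k > 0")
      case True
      then show ?thesis using k assms size_sub1[of k K y] by (intro bexI[of _ "(k,1)"]) (auto simp: EV_def)
    next
      case False
      then have "snd y k > 0" using k by simp
      then show ?thesis using k assms size_sub2[of k K y] by (intro bexI[of _ "(k,2)"]) (auto simp: EV_def)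
    qed
  qed
qed

lemma reach_mp:
  assumes "\<forall>k<K. lam k \<ge> 0" "\<forall>k<K. mu k > 0"
  shows "\<forall>x\<in>state_space K m n. reach (state_space K m n) (mp_rate K m n lam mu) x z0"
proof
  fix x assume x: "x \<in> state_space K m n"
  have rp: "rep (state_space K m n) (mp_rate K m n lam mu) (EV K) (mmv K m n) (mrt lam mu)"
    using assms by (intro rep_mp) (auto simp: less_imp_le)
  show "reach (state_space K m n) (mp_rate K m n lam mu) x z0"
  proof (rule reach_descent[OF rp _ x, where f="size_st K"], intro ballI impI)
    fix y assume y: "y \<in> state_space K m n" "y \<noteq> z0"
    then obtain k where k: "k < K" "fst y k > 0 \<or> snd y k > 0" using not_z0 by blast
    have "size_st K (mmv K m n y (k,1)) < size_st K y"
      using k size_sub1[of k K y] size_sub2[of k K y] by auto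
    then show "\<exists>e\<in>EV K. 0 < mrt lam mu y e \<and> size_st K (mmv K m n y e) < size_st K y"
      using k assms by (intro bexI[of _ "(k,1)"]) (auto simp: EV_def)
  qed
qed



lemma drift_loss:
  assumes x: "x \<in> state_space K m n" and k0: "k0 < K"
  shows "(\<Sum>e\<in>EV K. lrt lam mu x e * (real (fst (lmv K m n x e) k0 + snd (lmv K m n x e) k0) - real (fst x k0 + snd x k0)))
    = (if x \<in> blocking_set K m n k0 then 0 else lam k0) - mu k0 * real (fst x k0 + snd x k0)"
proof -
  define f where "f = (\<lambda>x::state. real (fst x k0 + snd x k0))"
  have oth: "f (lmv K m n x (k,t)) = f x" if "k \<noteq> k0" for k t
    using that by (auto simp: f_def arr_def)
  have t0: "lam k0 * (f (lmv K m n x (k0,0)) - f x) = (if x \<in> blocking_set K m n k0 then 0 else lam k0)"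
  proof -
    have xs: "fst x k0 \<le> m k0" "(\<Sum>l<K. snd x l) \<le> n" using x k0 unfolding ss_iff by auto
    show ?thesis
    proof (cases "x \<in> blocking_set K m n k0")
      case True
      then have "lmv K m n x (k0,0) = x" unfolding blocking_set_def by (simp add: arr_def)
      then show ?thesis using True by simp
    next
      case False
      then have "f (lmv K m n x (k0,0)) = f x + 1" using xs unfolding blocking_set_def by (auto simp: arr_def f_def)
      then show ?thesis using False by simp
    qed
  qed
  have t1: "lrt lam mu x (k0,1) * (f (lmv K m n x (k0,1)) - f x) = - mu k0 * real (fst x k0)"
    unfolding f_def by (cases "fst x k0") auto
  have t2: "lrt lam mu x (k0,2) * (f (lmv K m n x (k0,2)) - f x) = - mu k0 * real (snd x k0)"
    unfolding f_def by (cases "snd x k0") auto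
  have "(\<Sum>e\<in>EV K. lrt lam mu x e * (f (lmv K m n x e) - f x))
     = (\<Sum>k<K. if k = k0 then (if x \<in> blocking_set K m n k0 then 0 else lam k0) - mu k0 * f x else 0)"
    unfolding sum_EV
  proof (intro sum.cong refl)
    fix k assume "k \<in> {..<K}"
    show "lrt lam mu x (k, 0) * (f (lmv K m n x (k, 0)) - f x) + lrt lam mu x (k, 1) * (f (lmv K m n x (k, 1)) - f x) +
        lrt lam mu x (k, 2) * (f (lmv K m n x (k, 2)) - f x) =
        (if k = k0 then (if x \<in> blocking_set K m n k0 then 0 else lam k0) - mu k0 * f x else 0)"
    proof (cases "k = k0")
      case True
      have fx: "f x = real (fst x k0) + real (snd x k0)" unfolding f_def by simp
      show ?thesis unfolding True using t0 t1 t2 fx by (simp add: algebra_simps)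
    next
      case False
      have e: "\<And>t. f (lmv K m n x (k,t)) = f x" using oth[OF False] .
      show ?thesis by (simp only: e diff_self mult_zero_right add_0_right if_not_P[OF False])
    qed
  qed
  also have "\<dots> = (if x \<in> blocking_set K m n k0 then 0 else lam k0) - mu k0 * f x" using k0 by simp
  finally show ?thesis unfolding f_def .
qed

lemma drift_mp:
  assumes x: "x \<in> state_space K m n" and k0: "k0 < K"
  shows "(\<Sum>e\<in>EV K. mrt lam mu x e * (real (fst (mmv K m n x e) k0 + snd (mmv K m n x e) k0) - real (fst x k0 + snd x k0)))
    = (if x \<in> blocking_set K m n k0 then 0 else lam k0) - mu k0 * real (fst x k0 + snd x k0)"
proof -
  define f where "f = (\<lambda>x::state. real (fst x k0 + snd x k0))"
  have oth: "f (mmv K m n x (k,t)) = f x" if "k \<noteq> k0" for k t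
    using that by (auto simp: f_def arr_def)
  have t0: "lam k0 * (f (mmv K m n x (k0,0)) - f x) = (if x \<in> blocking_set K m n k0 then 0 else lam k0)"
  proof -
    have xs: "fst x k0 \<le> m k0" "(\<Sum>l<K. snd x l) \<le> n" using x k0 unfolding ss_iff by auto
    show ?thesis
    proof (cases "x \<in> blocking_set K m n k0")
      case True
      then have "mmv K m n x (k0,0) = x" unfolding blocking_set_def by (simp add: arr_def)
      then show ?thesis using True by simp
    next
      case False
      then have "f (mmv K m n x (k0,0)) = f x + 1" using xs unfolding blocking_set_def by (auto simp: arr_def f_def)
      then show ?thesis using False by simp
    qed
  qed
  have t1: "mrt lam mu x (k0,1) * (f (mmv K m n x (k0,1)) - f x) = - mu k0 * f x"
    unfolding f_def by (cases "snd x k0"; cases "fst x k0") auto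
  have "(\<Sum>e\<in>EV K. mrt lam mu x e * (f (mmv K m n x e) - f x))
     = (\<Sum>k<K. if k = k0 then (if x \<in> blocking_set K m n k0 then 0 else lam k0) - mu k0 * f x else 0)"
    unfolding sum_EV
  proof (intro sum.cong refl)
    fix k assume "k \<in> {..<K}"
    show "mrt lam mu x (k, 0) * (f (mmv K m n x (k, 0)) - f x) + mrt lam mu x (k, 1) * (f (mmv K m n x (k, 1)) - f x) +
        mrt lam mu x (k, 2) * (f (mmv K m n x (k, 2)) - f x) =
        (if k = k0 then (if x \<in> blocking_set K m n k0 then 0 else lam k0) - mu k0 * f x else 0)"
    proof (cases "k = k0")
      case True
      show ?thesis unfolding True using t0 t1 by (simp add: algebra_simps)
    next
      case False
      have e: "\<And>t. f (mmv K m n x (k,t)) = f x" using oth[OF False] .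
      show ?thesis by (simp only: e diff_self mult_zero_right add_0_right if_not_P[OF False])
    qed
  qed
  also have "\<dots> = (if x \<in> blocking_set K m n k0 then 0 else lam k0) - mu k0 * f x" using k0 by simp
  finally show ?thesis unfolding f_def .
qed

lemma little_gen:
  assumes fS: "finite S" and st: "stationary S q p"
    and dr: "\<forall>x\<in>S. (\<Sum>y\<in>S-{x}. q x y * (f y - f x)) = (if x \<in> B then 0 else l) - u * f x"
  shows "l * (1 - (\<Sum>x\<in>S \<inter> B. p x)) = u * (\<Sum>x\<in>S. p x * f x)"
proof -
  have "0 = (\<Sum>x\<in>S. p x * (\<Sum>y\<in>S-{x}. q x y * (f y - f x)))"
    using stat_drift[OF fS stationary_balanced[OF st]] by simp
  also have "\<dots> = (\<Sum>x\<in>S. p x * ((if x \<in> B then 0 else l) - u * f x))" using dr by simp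
  also have "\<dots> = (\<Sum>x\<in>S. if x \<in> B then 0 else l * p x) - u * (\<Sum>x\<in>S. p x * f x)"
  proof -
    have "\<And>x. p x * ((if x \<in> B then 0 else l) - u * f x) = (if x \<in> B then 0 else l * p x) - u * (p x * f x)"
      by (simp add: algebra_simps)
    then show ?thesis by (simp add: sum_subtractf sum_distrib_left)
  qed
  also have "(\<Sum>x\<in>S. if x \<in> B then 0 else l * p x) = l * (\<Sum>x\<in>S - B. p x)"
    using fS by (simp add: sum.If_cases sum_distrib_left Diff_eq)
  also have "(\<Sum>x\<in>S - B. p x) = 1 - (\<Sum>x\<in>S \<inter> B. p x)"
  proof -
    have "sum p S = sum p (S \<inter> B) + sum p (S - B)" by (rule sum.Int_Diff[OF fS])
    moreover have "sum p S = 1" using st unfolding stationary_def by blast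
    ultimately show ?thesis by linarith
  qed
  finally show ?thesis by simp
qed

lemma mean_k_eq: "mean_k S p k = (\<Sum>x\<in>S. p x * real (fst x k + snd x k))" by (simp add: mean_k_def)

lemma little_loss:
  assumes st: "stationary (state_space K m n) (loss_rate K m n lam mu) p"
    and lnn: "\<forall>k<K. lam k \<ge> 0" and mnn: "\<forall>k<K. mu k \<ge> 0" and k0: "k0 < K"
  shows "lam k0 * (1 - (\<Sum>x\<in>state_space K m n \<inter> blocking_set K m n k0. p x)) = mu k0 * mean_k (state_space K m n) p k0"
  unfolding mean_k_eq
proof (rule little_gen[OF finite_ss st], intro ballI)
  fix x assume x: "x \<in> state_space K m n"
  show "(\<Sum>y\<in>state_space K m n - {x}. loss_rate K m n lam mu x y * (real (fst y k0 + snd y k0) - real (fst x k0 + snd x k0)))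
      = (if x \<in> blocking_set K m n k0 then 0 else lam k0) - mu k0 * real (fst x k0 + snd x k0)"
    by (rule trans[OF rep_drift[OF rep_loss[OF lnn mnn] finite_ss x, where f="\<lambda>x. real (fst x k0 + snd x k0)"] drift_loss[OF x k0]])
qed

lemma little_mp:
  assumes st: "stationary (state_space K m n) (mp_rate K m n lam mu) p"
    and lnn: "\<forall>k<K. lam k \<ge> 0" and mnn: "\<forall>k<K. mu k \<ge> 0" and k0: "k0 < K"
  shows "lam k0 * (1 - (\<Sum>x\<in>state_space K m n \<inter> blocking_set K m n k0. p x)) = mu k0 * mean_k (state_space K m n) p k0"
  unfolding mean_k_eq
proof (rule little_gen[OF finite_ss st], intro ballI)
  fix x assume x: "x \<in> state_space K m n"
  show "(\<Sum>y\<in>state_space K m n - {x}. mp_rate K m n lam mu x y * (real (fst y k0 + snd y k0) - real (fst x k0 + snd x k0)))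
      = (if x \<in> blocking_set K m n k0 then 0 else lam k0) - mu k0 * real (fst x k0 + snd x k0)"
    by (rule trans[OF rep_drift[OF rep_mp[OF lnn mnn] finite_ss x, where f="\<lambda>x. real (fst x k0 + snd x k0)"] drift_mp[OF x k0]])
qed

lemma blocking_eq:
  assumes L: "\<forall>k<K. lam k * (1 - (\<Sum>x\<in>S \<inter> blocking_set K m n k. p x)) = mu k * mean_k S p k"
    and Lp: "(\<Sum>k<K. lam k) > 0"
  shows "blocking K m n lam S p = 1 - throughput K mu S p / (\<Sum>k<K. lam k)"
proof -
  have "(\<Sum>k<K. lam k * (\<Sum>x\<in>S \<inter> blocking_set K m n k. p x)) = (\<Sum>k<K. lam k) - throughput K mu S p"
  proof -
    have "(\<Sum>k<K. lam k * (\<Sum>x\<in>S \<inter> blocking_set K m n k. p x)) = (\<Sum>k<K. lam k - mu k * mean_k S p k)"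
      using L by (intro sum.cong refl) (auto simp: algebra_simps)
    then show ?thesis unfolding throughput_def by (simp add: sum_subtractf)
  qed
  then show ?thesis unfolding blocking_def using Lp by (simp add: field_simps)
qed

lemma mean_total_alt: "mean_total K S p = (\<Sum>x\<in>S. p x * real (size_st K x))"
  unfolding mean_total_def mean_k_def size_st_def
  by (subst sum.swap) (simp add: sum_distrib_left)

lemma marg_sum:
  fixes \<rho> :: "'s \<Rightarrow> real" and g :: "'a \<Rightarrow> real"
  assumes "finite R" "\<pi> ` R \<subseteq> S" "finite S" "\<forall>x\<in>S. p x = (\<Sum>s\<in>{s\<in>R. \<pi> s = x}. \<rho> s)"
  shows "(\<Sum>x\<in>S. p x * g x) = (\<Sum>s\<in>R. \<rho> s * g (\<pi> s))"
proof -
  have "(\<Sum>x\<in>S. p x * g x) = (\<Sum>x\<in>S. \<Sum>s\<in>{s\<in>R. \<pi> s = x}. \<rho> s * g (\<pi> s))"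
  proof (intro sum.cong refl)
    fix x assume x: "x \<in> S"
    have "(\<Sum>s\<in>{s\<in>R. \<pi> s = x}. \<rho> s * g (\<pi> s)) = (\<Sum>s\<in>{s\<in>R. \<pi> s = x}. \<rho> s * g x)"
      by (rule sum.cong) auto
    also have "\<dots> = (\<Sum>s\<in>{s\<in>R. \<pi> s = x}. \<rho> s) * g x" by (simp only: sum_distrib_right)
    finally show "p x * g x = (\<Sum>s\<in>{s\<in>R. \<pi> s = x}. \<rho> s * g (\<pi> s))" using assms(4) x by simp
  qed
  also have "\<dots> = (\<Sum>s\<in>R. \<rho> s * g (\<pi> s))" by (rule sum_group_proj[OF assms(1-3)])
  finally show ?thesis .
qed

lemma compare:
  assumes fS1: "finite S1" and fS2: "finite S2" and RS: "R \<subseteq> S1 \<times> S2"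
    and rnn: "\<forall>s\<in>R. \<rho> s \<ge> 0" and le: "\<forall>s\<in>R. size_st K (fst s) \<le> size_st K (snd s)"
    and p1: "\<forall>x\<in>S1. p1 x = (\<Sum>s\<in>{s\<in>R. fst s = x}. \<rho> s)"
    and p2: "\<forall>y\<in>S2. p2 y = (\<Sum>s\<in>{s\<in>R. snd s = y}. \<rho> s)"
  shows "size_st_le K S1 p1 S2 p2 \<and> mean_total K S1 p1 \<le> mean_total K S2 p2"
proof
  have fR: "finite R" using finite_prod_subset[OF fS1 fS2 RS] .
  have i1: "fst ` R \<subseteq> S1" and i2: "snd ` R \<subseteq> S2" using RS by auto
  show "size_st_le K S1 p1 S2 p2"
    unfolding size_st_le_def
  proof
    fix t :: real
    have "(\<Sum>x\<in>{x\<in>S1. real (size_st K x) > t}. p1 x) = (\<Sum>x\<in>S1. p1 x * (if real (size_st K x) > t then 1 else 0))"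
      using fS1 by (simp add: sum.inter_filter[symmetric] if_distrib cong: if_cong)
    also have "\<dots> = (\<Sum>s\<in>R. \<rho> s * (if real (size_st K (fst s)) > t then 1 else 0))"
      by (rule marg_sum[OF fR i1 fS1 p1])
    also have "\<dots> \<le> (\<Sum>s\<in>R. \<rho> s * (if real (size_st K (snd s)) > t then 1 else 0))"
    proof (intro sum_mono)
      fix s assume s: "s \<in> R"
      then have "real (size_st K (fst s)) \<le> real (size_st K (snd s))" using le by auto
      then show "\<rho> s * (if real (size_st K (fst s)) > t then 1 else 0) \<le> \<rho> s * (if real (size_st K (snd s)) > t then 1 else 0)"
        using rnn s by auto
    qed
    also have "\<dots> = (\<Sum>x\<in>S2. p2 x * (if real (size_st K x) > t then 1 else 0))"
      by (rule marg_sum[OF fR i2 fS2 p2, symmetric])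
    also have "\<dots> = (\<Sum>x\<in>{x\<in>S2. real (size_st K x) > t}. p2 x)"
      using fS2 by (simp add: sum.inter_filter[symmetric] if_distrib cong: if_cong)
    finally show "(\<Sum>x\<in>{x\<in>S1. real (size_st K x) > t}. p1 x) \<le> (\<Sum>x\<in>{x\<in>S2. real (size_st K x) > t}. p2 x)" .
  qed
  have "mean_total K S1 p1 = (\<Sum>s\<in>R. \<rho> s * real (size_st K (fst s)))"
    unfolding mean_total_alt by (rule marg_sum[OF fR i1 fS1 p1])
  also have "\<dots> \<le> (\<Sum>s\<in>R. \<rho> s * real (size_st K (snd s)))"
    using rnn le by (intro sum_mono mult_left_mono) auto
  also have "\<dots> = mean_total K S2 p2"
    unfolding mean_total_alt by (rule marg_sum[OF fR i2 fS2 p2, symmetric])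
  finally show "mean_total K S1 p1 \<le> mean_total K S2 p2" .
qed



lemma apr_nz1: "apr a b D i \<noteq> 0 \<Longrightarrow> (D i \<longrightarrow> b i \<le> a i) \<Longrightarrow> b i \<ge> 0 \<Longrightarrow> a i \<noteq> 0"
  unfolding apr_def by (cases "D i") auto
lemma apr_nz2: "apr a b D i \<noteq> 0 \<Longrightarrow> D i \<Longrightarrow> a i \<noteq> b i"
  unfolding apr_def by auto

lemma sum_size: "real (size_st K x) = (\<Sum>k<K. real (fst x k + snd x k))"
  unfolding size_st_def by (simp only: of_nat_sum)

lemma sum_fst_snd_size: "size_st K x = (\<Sum>k<K. fst x k) + (\<Sum>k<K. snd x k)" by (rule size_st_alt)

lemma dep_loss:
  assumes x: "x \<in> state_space K m n" and l: "l < K" and u: "u \<noteq> 0" "u \<in> {0,1,2}"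
    and nz: "lrt lam mu x (l,u) \<noteq> 0"
  shows "lmv K m n x (l,u) \<in> state_space K m n \<and> size_st K (lmv K m n x (l,u)) + 1 = size_st K x
    \<and> (\<forall>k. fst (lmv K m n x (l,u)) k \<le> fst x k) \<and> (\<forall>k. k \<noteq> l \<longrightarrow> fst (lmv K m n x (l,u)) k = fst x k)"
proof (cases "u = 1")
  case True
  then have p: "fst x l > 0" using nz by (cases "fst x l") auto
  show ?thesis using True ss_sub1[OF x] size_sub1[OF l p] by auto
next
  case False
  then have u2: "u = 2" using u by auto
  then have p: "snd x l > 0" using nz by (cases "snd x l") auto
  show ?thesis using u2 ss_sub2[OF x l] size_sub2[OF l p] by auto
qed

lemma dep_mp:
  assumes y: "y \<in> state_space K m n" and k: "k < K"
    and nz: "mrt lam mu y (k,1) \<noteq> 0"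
  shows "mmv K m n y (k,1) \<in> state_space K m n \<and> size_st K (mmv K m n y (k,1)) + 1 = size_st K y
    \<and> (\<forall>l. l \<noteq> k \<longrightarrow> fst (mmv K m n y (k,1)) l = fst y l)
    \<and> fst (mmv K m n y (k,1)) k = (if snd y k = 0 then fst y k - 1 else fst y k)
    \<and> (snd y k = 0 \<longrightarrow> fst y k > 0)"
proof (cases "snd y k = 0")
  case True
  then have p: "fst y k > 0" using nz by (cases "fst y k") auto
  show ?thesis using True ss_sub1[OF y] size_sub1[OF k p] p by auto
next
  case False
  then have p: "snd y k > 0" by simp
  show ?thesis using False ss_sub2[OF y k] size_sub2[OF k p] by auto
qed

lemma arr_cases:
  "(arr K m n x k = add1 x k \<and> fst x k < m k) \<or>
   (arr K m n x k = add2 x k \<and> fst x k = m k \<and> (\<Sum>l<K. snd x l) < n) \<or>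
   (arr K m n x k = x \<and> \<not> fst x k < m k \<and> \<not> (fst x k = m k \<and> (\<Sum>l<K. snd x l) < n))"
  unfolding arr_def by auto

lemma ssD: "x \<in> state_space K m n \<Longrightarrow> k < K \<Longrightarrow> fst x k \<le> m k"
  "x \<in> state_space K m n \<Longrightarrow> (\<Sum>k<K. snd x k) \<le> n"
  unfolding ss_iff by blast+

definition R1 :: "nat \<Rightarrow> (nat \<Rightarrow> nat) \<Rightarrow> nat \<Rightarrow> (state \<times> state) set" where
  "R1 K m n = {s. fst s \<in> state_space K m n \<and> snd s \<in> state_space K m n \<and>
     (\<forall>k<K. fst (fst s) k \<le> fst (snd s) k) \<and> size_st K (fst s) \<le> size_st K (snd s)}"

lemma R1_iff: "(x, y) \<in> R1 K m n \<longleftrightarrow> x \<in> state_space K m n \<and> y \<in> state_space K m n \<and>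
     (\<forall>k<K. fst x k \<le> fst y k) \<and> size_st K x \<le> size_st K y"
  unfolding R1_def by simp

lemma arr_R1:
  assumes xy: "(x, y) \<in> R1 K m n" and k: "k < K"
  shows "(arr K m n x k, arr K m n y k) \<in> R1 K m n"
proof -
  have x: "x \<in> state_space K m n" and y: "y \<in> state_space K m n"
    and le: "\<forall>l<K. fst x l \<le> fst y l" and sz: "size_st K x \<le> size_st K y"
    using xy unfolding R1_iff by auto
  have xa: "arr K m n x k \<in> state_space K m n" and ya: "arr K m n y k \<in> state_space K m n"
    using ss_arr[OF x k] ss_arr[OF y k] .
  have szx: "size_st K (arr K m n x k) \<le> size_st K x + 1"
    using arr_cases[of K m n x k] size_add1[OF k, of x] size_add2[OF k, of x] by auto
  have fx: "\<forall>l. l \<noteq> k \<longrightarrow> fst (arr K m n x k) l = fst x l"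
    using arr_cases[of K m n x k] by auto
  have fy: "\<forall>l. l \<noteq> k \<longrightarrow> fst (arr K m n y k) l = fst y l"
    using arr_cases[of K m n y k] by auto
  consider (a) "fst y k < m k" | (b) "fst y k = m k" "(\<Sum>l<K. snd y l) < n"
    | (c) "fst y k = m k" "(\<Sum>l<K. snd y l) = n"
    using ssD(1)[OF y k] ssD(2)[OF y] by (metis le_neq_implies_less)
  then show ?thesis
  proof cases
    case a
    then have ey: "arr K m n y k = add1 y k" unfolding arr_def by simp
    have "fst x k < m k" using a le k by (meson order.strict_trans1)
    then have ex: "arr K m n x k = add1 x k" unfolding arr_def by simp
    have c1: "\<forall>l<K. fst (add1 x k) l \<le> fst (add1 y k) l" using le by simp
    have c2: "size_st K (add1 x k) \<le> size_st K (add1 y k)" using size_add1[OF k, of x] size_add1[OF k, of y] sz by simp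
    show ?thesis using xa ya c1 c2 unfolding R1_iff ex ey by blast
  next
    case b
    then have ey: "arr K m n y k = add2 y k" unfolding arr_def by simp
    have c1: "\<forall>l<K. fst (arr K m n x k) l \<le> fst (arr K m n y k) l"
    proof (intro allI impI)
      fix l assume l: "l < K"
      show "fst (arr K m n x k) l \<le> fst (arr K m n y k) l"
      proof (cases "l = k")
        case True
        have "fst (arr K m n x k) k \<le> m k"
          using arr_cases[of K m n x k] ssD(1)[OF x k] by auto
        then show ?thesis using True ey b by simp
      next
        case False then show ?thesis using fx ey le l by simp
      qed
    qed
    have "size_st K (arr K m n y k) = size_st K y + 1" using ey size_add2[OF k] by simp
    then show ?thesis unfolding R1_iff using xa ya c1 szx sz by simp
  next
    case c
    then have ey: "arr K m n y k = y" unfolding arr_def by simp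
    have c1: "\<forall>l<K. fst (arr K m n x k) l \<le> fst (arr K m n y k) l"
    proof (intro allI impI)
      fix l assume l: "l < K"
      show "fst (arr K m n x k) l \<le> fst (arr K m n y k) l"
      proof (cases "l = k")
        case True
        have "fst (arr K m n x k) k \<le> m k"
          using arr_cases[of K m n x k] ssD(1)[OF x k] by auto
        then show ?thesis using True ey c by simp
      next
        case False then show ?thesis using fx ey le l by simp
      qed
    qed
    have "size_st K (arr K m n x k) \<le> size_st K y"
    proof -
      consider (a1) "arr K m n x k = add1 x k" "fst x k < m k"
        | (a2) "arr K m n x k = add2 x k" "fst x k = m k" "(\<Sum>l<K. snd x l) < n"
        | (a3) "arr K m n x k = x" using arr_cases[of K m n x k] by blast
      then show ?thesis
      proof cases
        case a1
        have "(\<Sum>l<K. fst x l) < (\<Sum>l<K. fst y l)"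
        proof (rule sum_strict_mono_ex1)
          show "finite {..<K}" by simp
          show "\<forall>l\<in>{..<K}. fst x l \<le> fst y l" using le by simp
          show "\<exists>l\<in>{..<K}. fst x l < fst y l" using k a1(2) c(1) by (intro bexI[of _ k]) auto
        qed
        moreover have "(\<Sum>l<K. snd x l) \<le> (\<Sum>l<K. snd y l)" using ssD(2)[OF x] c by simp
        ultimately show ?thesis using size_add1[OF k, of x] unfolding a1(1) size_st_alt by linarith
      next
        case a2
        have "(\<Sum>l<K. fst x l) \<le> (\<Sum>l<K. fst y l)" by (rule sum_mono) (use le in auto)
        then show ?thesis using size_add2[OF k, of x] a2(3) c(2) ssD(2)[OF x] unfolding a2(1) size_st_alt by linarith
      next
        case a3 then show ?thesis using sz by simp
      qed
    qed
    then show ?thesis unfolding R1_iff using xa ya c1 ey by simp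
  qed
qed

lemma ydep_comp:
  assumes y: "y \<in> state_space K m n" and k: "k < K" and nz: "mrt lam mu y (k,1) \<noteq> 0"
    and le: "\<forall>l<K. fst x l \<le> fst y l" and nd: "\<not> (snd y k = 0 \<and> fst x k = fst y k)"
  shows "\<forall>l<K. fst x l \<le> fst (mmv K m n y (k,1)) l"
proof (intro allI impI)
  fix l assume l: "l < K"
  note d = dep_mp[OF y k nz]
  show "fst x l \<le> fst (mmv K m n y (k,1)) l"
  proof (cases "l = k")
    case True
    show ?thesis
    proof (cases "snd y k = 0")
      case True
      then have "fst x k < fst y k" using nd le k by (simp add: order_less_le)
      then show ?thesis using d True \<open>l = k\<close> by simp
    next
      case False
      then show ?thesis using d le k \<open>l = k\<close> by simp
    qed
  next
    case False then show ?thesis using d le l by simp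
  qed
qed

lemma coupling1:
  assumes lnn: "\<forall>k<K. lam k \<ge> 0" and mpos: "\<forall>k<K. mu k > 0" and nupos: "nu > 0"
    and nule: "\<forall>k<K. nu \<le> mu k"
  shows "\<exists>\<rho>. (\<forall>s\<in>R1 K m n. \<rho> s \<ge> 0)
     \<and> stationary (state_space K m n) (loss_rate K m n lam mu) (\<lambda>x. \<Sum>s\<in>{s\<in>R1 K m n. fst s = x}. \<rho> s)
     \<and> stationary (state_space K m n) (mp_rate K m n lam (\<lambda>_. nu)) (\<lambda>y. \<Sum>s\<in>{s\<in>R1 K m n. snd s = y}. \<rho> s)"
proof -
  define S where "S = state_space K m n"
  define D where "D = (\<lambda>(s::state\<times>state) (e::nat\<times>nat). snd e = 0 \<or>
       (snd e = 1 \<and> snd (snd s) (fst e) = 0 \<and> fst (fst s) (fst e) = fst (snd s) (fst e)))"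
  define tg where "tg = (\<lambda>s::state\<times>state. size_st K (fst s) = size_st K (snd s))"
  define R where "R = R1 K m n"
  have mnn: "\<forall>k<K. mu k \<ge> 0" using mpos by (simp add: less_imp_le)
  have nnn: "\<forall>k<K. (\<lambda>_. nu) k \<ge> (0::real)" using nupos by simp
  have rep1: "rep S (loss_rate K m n lam mu) (EV K) (lmv K m n) (lrt lam mu)"
    unfolding S_def by (rule rep_loss[OF lnn mnn])
  have rep2: "rep S (mp_rate K m n lam (\<lambda>_. nu)) (EV K) (mmv K m n) (mrt lam (\<lambda>_. nu))"
    unfolding S_def by (rule rep_mp[OF lnn nnn])
  have RS: "R \<subseteq> S \<times> S" unfolding R_def R1_def S_def by auto
  have Rne: "R \<noteq> {}"
  proof -
    have "(z0, z0) \<in> R" unfolding R_def R1_iff using z0_ss by simp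
    then show ?thesis by blast
  qed
  have EVd: "e \<in> EV K \<Longrightarrow> (\<exists>k t. e = (k,t) \<and> k < K \<and> (t = 0 \<or> t = 1 \<or> t = 2))" for e
    unfolding EV_def by auto
  have H1: "\<forall>s\<in>R. \<forall>e\<in>EV K. D s e \<longrightarrow> mrt lam (\<lambda>_. nu) (snd s) e \<le> lrt lam mu (fst s) e"
  proof (intro ballI impI)
    fix s e assume s: "s \<in> R" and e: "e \<in> EV K" and De: "D s e"
    obtain k t where kt: "e = (k,t)" "k < K" "t = 0 \<or> t = 1 \<or> t = 2" using EVd[OF e] by blast
    show "mrt lam (\<lambda>_. nu) (snd s) e \<le> lrt lam mu (fst s) e"
    proof (cases "t = 0")
      case True then show ?thesis using kt by simp
    next
      case False
      then have c: "t = 1" "snd (snd s) k = 0" "fst (fst s) k = fst (snd s) k" using De kt unfolding D_def by auto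
      have "nu * real (fst (fst s) k) \<le> mu k * real (fst (fst s) k)"
        using nule kt(2) by (intro mult_right_mono) auto
      then show ?thesis using kt c by simp
    qed
  qed
  have H2: "\<forall>s\<in>R. tg s \<longrightarrow> (\<Sum>e\<in>EV K. mrt lam (\<lambda>_. nu) (snd s) e) \<le> (\<Sum>e\<in>EV K. lrt lam mu (fst s) e)"
  proof (intro ballI impI)
    fix s assume s: "s \<in> R" and t: "tg s"
    have "(\<Sum>e\<in>EV K. mrt lam (\<lambda>_. nu) (snd s) e) = (\<Sum>k<K. lam k) + nu * real (size_st K (snd s))"
      unfolding sum_EV sum_size by (simp add: sum.distrib sum_distrib_left distrib_left)
    also have "\<dots> = (\<Sum>k<K. lam k) + nu * real (size_st K (fst s))" using t unfolding tg_def by simp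
    also have "\<dots> = (\<Sum>k<K. lam k + nu * real (fst (fst s) k) + nu * real (snd (fst s) k))"
      unfolding sum_size by (simp add: sum.distrib sum_distrib_left algebra_simps)
    also have "\<dots> \<le> (\<Sum>k<K. lam k + mu k * real (fst (fst s) k) + mu k * real (snd (fst s) k))"
      using nule by (intro sum_mono add_mono mult_right_mono) auto
    also have "\<dots> = (\<Sum>e\<in>EV K. lrt lam mu (fst s) e)" unfolding sum_EV by simp
    finally show "(\<Sum>e\<in>EV K. mrt lam (\<lambda>_. nu) (snd s) e) \<le> (\<Sum>e\<in>EV K. lrt lam mu (fst s) e)" .
  qed
  have V1: "\<forall>s\<in>R. \<forall>j\<in>EV K. D s j \<longrightarrow> mrt lam (\<lambda>_. nu) (snd s) j \<noteq> 0 \<longrightarrow> (lmv K m n (fst s) j, mmv K m n (snd s) j) \<in> R"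
  proof (intro ballI impI)
    fix s j assume s: "s \<in> R" and j: "j \<in> EV K" and Dj: "D s j" and nz: "mrt lam (\<lambda>_. nu) (snd s) j \<noteq> 0"
    obtain x y where xy: "s = (x,y)" by (cases s)
    have sR: "(x,y) \<in> R1 K m n" using s xy unfolding R_def by simp
    then have x: "x \<in> state_space K m n" and y: "y \<in> state_space K m n"
      and le: "\<forall>l<K. fst x l \<le> fst y l" and sz: "size_st K x \<le> size_st K y" unfolding R1_iff by auto
    obtain k t where kt: "j = (k,t)" "k < K" "t = 0 \<or> t = 1 \<or> t = 2" using EVd[OF j] by blast
    show "(lmv K m n (fst s) j, mmv K m n (snd s) j) \<in> R"
    proof (cases "t = 0")
      case True then show ?thesis using arr_R1[OF sR kt(2)] kt xy unfolding R_def by simp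
    next
      case False
      then have c: "t = 1" "snd y k = 0" "fst x k = fst y k" using Dj kt xy unfolding D_def by auto
      have p: "fst y k > 0" using nz c kt xy by (cases "fst y k") auto
      have ex: "lmv K m n (fst s) j = sub1 x k" and ey: "mmv K m n (snd s) j = sub1 y k" using kt xy c by auto
      have c1: "\<forall>l<K. fst (sub1 x k) l \<le> fst (sub1 y k) l" using le c by auto
      have c2: "size_st K (sub1 x k) \<le> size_st K (sub1 y k)"
        using size_sub1[OF kt(2), of x] size_sub1[OF kt(2), of y] p c sz by simp
      show ?thesis unfolding ex ey R_def R1_iff using ss_sub1[OF x] ss_sub1[OF y] c1 c2 by blast
    qed
  qed
  have aprX: "lrt lam mu x i \<noteq> 0 \<and> snd i \<noteq> 0"
    if s: "(x,y) \<in> R" and i: "i \<in> EV K" and a: "apr (lrt lam mu x) (mrt lam (\<lambda>_. nu) y) (D (x,y)) i \<noteq> 0" for x y i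
  proof
    have "D (x,y) i \<longrightarrow> mrt lam (\<lambda>_. nu) y i \<le> lrt lam mu x i" using H1 s i by force
    moreover have "mrt lam (\<lambda>_. nu) y i \<ge> 0"
    proof -
      have "y \<in> S" using s RS by auto
      then show ?thesis using rep2 i unfolding rep_def by blast
    qed
    ultimately show "lrt lam mu x i \<noteq> 0" using apr_nz1[OF a] by blast
    show "snd i \<noteq> 0"
    proof
      assume "snd i = 0"
      then have "D (x,y) i" unfolding D_def by simp
      from apr_nz2[OF a this] \<open>snd i = 0\<close> show False by (cases i) simp
    qed
  qed
  have V2: "\<forall>s\<in>R. \<forall>i\<in>EV K. \<forall>j\<in>EV K. \<not> D s j \<longrightarrow> tg s \<longrightarrow> mrt lam (\<lambda>_. nu) (snd s) j \<noteq> 0 \<longrightarrow>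
        apr (lrt lam mu (fst s)) (mrt lam (\<lambda>_. nu) (snd s)) (D s) i \<noteq> 0 \<longrightarrow> (lmv K m n (fst s) i, mmv K m n (snd s) j) \<in> R"
  proof (intro ballI impI)
    fix s i j assume s: "s \<in> R" and i: "i \<in> EV K" and j: "j \<in> EV K" and nD: "\<not> D s j" and t: "tg s"
      and nz: "mrt lam (\<lambda>_. nu) (snd s) j \<noteq> 0" and a: "apr (lrt lam mu (fst s)) (mrt lam (\<lambda>_. nu) (snd s)) (D s) i \<noteq> 0"
    obtain x y where xy: "s = (x,y)" by (cases s)
    have sR: "(x,y) \<in> R" using s xy by simp
    then have x: "x \<in> state_space K m n" and y: "y \<in> state_space K m n"
      and le: "\<forall>l<K. fst x l \<le> fst y l" and sz: "size_st K x = size_st K y"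
      using t xy unfolding R_def R1_iff tg_def by auto
    obtain k t where kt: "j = (k,t)" "k < K" "t = 0 \<or> t = 1 \<or> t = 2" using EVd[OF j] by blast
    have t1: "t = 1" using nD nz kt xy unfolding D_def by auto
    have nd: "\<not> (snd y k = 0 \<and> fst x k = fst y k)" using nD kt t1 xy unfolding D_def by auto
    have nzy: "mrt lam (\<lambda>_. nu) y (k,1) \<noteq> 0" using nz kt t1 xy by simp
    obtain l u where lu: "i = (l,u)" "l < K" "u = 0 \<or> u = 1 \<or> u = 2" using EVd[OF i] by blast
    have ax: "lrt lam mu x (l,u) \<noteq> 0" "u \<noteq> 0" using aprX[OF sR i] a xy lu by auto
    have u3: "u \<in> {0,1,2}" using lu(3) by auto
    note dx = dep_loss[OF x lu(2) ax(2) u3 ax(1)]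
    note dy = dep_mp[OF y kt(2) nzy]
    have c1: "\<forall>l'<K. fst (lmv K m n x (l,u)) l' \<le> fst (mmv K m n y (k,1)) l'"
    proof (intro allI impI)
      fix l' assume l': "l' < K"
      have "fst (lmv K m n x (l,u)) l' \<le> fst x l'" using dx by blast
      also have "\<dots> \<le> fst (mmv K m n y (k,1)) l'" using ydep_comp[OF y kt(2) nzy le nd] l' by blast
      finally show "fst (lmv K m n x (l,u)) l' \<le> fst (mmv K m n y (k,1)) l'" .
    qed
    have c2: "size_st K (lmv K m n x (l,u)) \<le> size_st K (mmv K m n y (k,1))"
      using dx dy sz by linarith
    show "(lmv K m n (fst s) i, mmv K m n (snd s) j) \<in> R"
      unfolding R_def R1_iff using dx dy c1 c2 xy lu kt t1 by auto
  qed
  have V3: "\<forall>s\<in>R. \<forall>i\<in>EV K. apr (lrt lam mu (fst s)) (mrt lam (\<lambda>_. nu) (snd s)) (D s) i \<noteq> 0 \<longrightarrow> (lmv K m n (fst s) i, snd s) \<in> R"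
  proof (intro ballI impI)
    fix s i assume s: "s \<in> R" and i: "i \<in> EV K"
      and a: "apr (lrt lam mu (fst s)) (mrt lam (\<lambda>_. nu) (snd s)) (D s) i \<noteq> 0"
    obtain x y where xy: "s = (x,y)" by (cases s)
    have sR: "(x,y) \<in> R" using s xy by simp
    then have x: "x \<in> state_space K m n" and y: "y \<in> state_space K m n"
      and le: "\<forall>l<K. fst x l \<le> fst y l" and sz: "size_st K x \<le> size_st K y"
      unfolding R_def R1_iff by auto
    obtain l u where lu: "i = (l,u)" "l < K" "u = 0 \<or> u = 1 \<or> u = 2" using EVd[OF i] by blast
    have ax: "lrt lam mu x (l,u) \<noteq> 0" "u \<noteq> 0" using aprX[OF sR i] a xy lu by auto
    have u3: "u \<in> {0,1,2}" using lu(3) by auto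
    note dx = dep_loss[OF x lu(2) ax(2) u3 ax(1)]
    have c1: "\<forall>l'<K. fst (lmv K m n x (l,u)) l' \<le> fst y l'"
    proof (intro allI impI)
      fix l' assume l': "l' < K"
      have "fst (lmv K m n x (l,u)) l' \<le> fst x l'" using dx by blast
      also have "\<dots> \<le> fst y l'" using le l' by blast
      finally show "fst (lmv K m n x (l,u)) l' \<le> fst y l'" .
    qed
    have c2: "size_st K (lmv K m n x (l,u)) \<le> size_st K y" using dx sz by linarith
    show "(lmv K m n (fst s) i, snd s) \<in> R"
      unfolding R_def R1_iff using dx c1 c2 xy lu y by auto
  qed
  have V4: "\<forall>s\<in>R. \<forall>j\<in>EV K. \<not> D s j \<longrightarrow> \<not> tg s \<longrightarrow> mrt lam (\<lambda>_. nu) (snd s) j \<noteq> 0 \<longrightarrow> (fst s, mmv K m n (snd s) j) \<in> R"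
  proof (intro ballI impI)
    fix s j assume s: "s \<in> R" and j: "j \<in> EV K" and nD: "\<not> D s j" and t: "\<not> tg s"
      and nz: "mrt lam (\<lambda>_. nu) (snd s) j \<noteq> 0"
    obtain x y where xy: "s = (x,y)" by (cases s)
    have sR: "(x,y) \<in> R" using s xy by simp
    then have x: "x \<in> state_space K m n" and y: "y \<in> state_space K m n"
      and le: "\<forall>l<K. fst x l \<le> fst y l" and sz: "size_st K x < size_st K y"
      using t xy unfolding R_def R1_iff tg_def by auto
    obtain k t where kt: "j = (k,t)" "k < K" "t = 0 \<or> t = 1 \<or> t = 2" using EVd[OF j] by blast
    have t1: "t = 1" using nD nz kt xy unfolding D_def by auto
    have nd: "\<not> (snd y k = 0 \<and> fst x k = fst y k)" using nD kt t1 xy unfolding D_def by auto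
    have nzy: "mrt lam (\<lambda>_. nu) y (k,1) \<noteq> 0" using nz kt t1 xy by simp
    note dy = dep_mp[OF y kt(2) nzy]
    have c1: "\<forall>l'<K. fst x l' \<le> fst (mmv K m n y (k,1)) l'" by (rule ydep_comp[OF y kt(2) nzy le nd])
    have c2: "size_st K x \<le> size_st K (mmv K m n y (k,1))" using dy sz by auto
    show "(fst s, mmv K m n (snd s) j) \<in> R"
      unfolding R_def R1_iff using dy c1 c2 xy kt t1 x by auto
  qed
  obtain \<rho> where r: "stationary R (cq (EV K) (lmv K m n) (mmv K m n) (\<lambda>s. pw (EV K) (lrt lam mu (fst s)) (mrt lam (\<lambda>_. nu) (snd s)) (D s) (tg s))) \<rho>"
     "stationary S (loss_rate K m n lam mu) (\<lambda>x. \<Sum>s\<in>{s\<in>R. fst s = x}. \<rho> s)"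
     "stationary S (mp_rate K m n lam (\<lambda>_. nu)) (\<lambda>y. \<Sum>s\<in>{s\<in>R. snd s = y}. \<rho> s)"
    using coupling_thm[OF rep1 rep2 finite_ss[of K m n, folded S_def] finite_ss[of K m n, folded S_def] RS Rne H1 H2 V1 V2 V3 V4]
    by blast
  have "\<forall>s\<in>R. \<rho> s \<ge> 0" using r(1) unfolding stationary_def by blast
  then show ?thesis using r(2,3) unfolding R_def S_def by blast
qed



lemma ss0_snd: "x \<in> state_space K m' 0 \<Longrightarrow> snd x l = 0"
proof -
  assume x: "x \<in> state_space K m' 0"
  show "snd x l = 0"
  proof (cases "l < K")
    case True
    have "snd x l \<le> (\<Sum>k<K. snd x k)" using True by (intro member_le_sum) auto
    then show ?thesis using ssD(2)[OF x] by simp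
  next
    case False then show ?thesis using x unfolding ss_iff by auto
  qed
qed

lemma size0: "x \<in> state_space K m' 0 \<Longrightarrow> size_st K x = (\<Sum>l<K. fst x l)"
  unfolding size_st_alt using ss0_snd[of x K m'] by simp

definition R2 :: "nat \<Rightarrow> (nat \<Rightarrow> nat) \<Rightarrow> (nat \<Rightarrow> nat) \<Rightarrow> nat \<Rightarrow> (state \<times> state) set" where
  "R2 K m' m n = {s. fst s \<in> state_space K m' 0 \<and> snd s \<in> state_space K m n \<and>
     (\<forall>k<K. fst (fst s) k \<le> fst (snd s) k + (m' k - m k)) \<and> size_st K (fst s) \<le> size_st K (snd s)}"

lemma R2_iff: "(x, y) \<in> R2 K m' m n \<longleftrightarrow> x \<in> state_space K m' 0 \<and> y \<in> state_space K m n \<and>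
     (\<forall>k<K. fst x k \<le> fst y k + (m' k - m k)) \<and> size_st K x \<le> size_st K y"
  unfolding R2_def by simp

lemma arr_R2:
  assumes xy: "(x, y) \<in> R2 K m' m n" and k: "k < K"
    and mle: "\<forall>k<K. m k \<le> m' k" and msum: "(\<Sum>k<K. m' k) = (\<Sum>k<K. m k) + n"
  shows "(arr K m' 0 x k, arr K m n y k) \<in> R2 K m' m n"
proof -
  have x: "x \<in> state_space K m' 0" and y: "y \<in> state_space K m n"
    and le: "\<forall>l<K. fst x l \<le> fst y l + (m' l - m l)" and sz: "size_st K x \<le> size_st K y"
    using xy unfolding R2_iff by auto
  have xa: "arr K m' 0 x k \<in> state_space K m' 0" and ya: "arr K m n y k \<in> state_space K m n"
    using ss_arr[OF x k] ss_arr[OF y k] .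
  have ax: "(arr K m' 0 x k = add1 x k \<and> fst x k < m' k) \<or> (arr K m' 0 x k = x)"
    unfolding arr_def by auto
  have fx: "\<forall>l. l \<noteq> k \<longrightarrow> fst (arr K m' 0 x k) l = fst x l" using ax by auto
  have fy: "\<forall>l. l \<noteq> k \<longrightarrow> fst (arr K m n y k) l = fst y l"
    using arr_cases[of K m n y k] by auto
  have fyk: "fst (arr K m n y k) k \<ge> fst y k" using arr_cases[of K m n y k] by auto
  have szx: "size_st K (arr K m' 0 x k) \<le> size_st K x + 1" using ax size_add1[OF k, of x] by auto
  have szy: "size_st K (arr K m n y k) \<ge> size_st K y" using arr_cases[of K m n y k] size_add1[OF k, of y] size_add2[OF k, of y] by auto
  have dsum: "(\<Sum>l<K. m' l - m l) = n"
  proof -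
    have "(\<Sum>l<K. m' l) = (\<Sum>l<K. m l + (m' l - m l))" using mle by (intro sum.cong) auto
    also have "\<dots> = (\<Sum>l<K. m l) + (\<Sum>l<K. m' l - m l)" by (simp add: sum.distrib)
    finally show ?thesis using msum by simp
  qed
  consider (a) "fst y k < m k" | (b) "fst y k = m k" "(\<Sum>l<K. snd y l) < n"
    | (c) "fst y k = m k" "(\<Sum>l<K. snd y l) = n"
    using ssD(1)[OF y k] ssD(2)[OF y] by (metis le_neq_implies_less)
  then show ?thesis
  proof cases
    case a
    then have ey: "arr K m n y k = add1 y k" unfolding arr_def by simp
    have c1: "\<forall>l<K. fst (arr K m' 0 x k) l \<le> fst (arr K m n y k) l + (m' l - m l)"
    proof (intro allI impI)
      fix l assume l: "l < K"
      show "fst (arr K m' 0 x k) l \<le> fst (arr K m n y k) l + (m' l - m l)"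
      proof (cases "l = k")
        case True
        have "fst (arr K m' 0 x k) k \<le> fst x k + 1" using ax by auto
        then show ?thesis using True ey le k by auto
      next
        case False then show ?thesis using fx fy le l by simp
      qed
    qed
    have "size_st K (arr K m n y k) = size_st K y + 1" using ey size_add1[OF k] by simp
    then show ?thesis unfolding R2_iff using xa ya c1 szx sz by simp
  next
    case b
    then have ey: "arr K m n y k = add2 y k" unfolding arr_def by simp
    have c1: "\<forall>l<K. fst (arr K m' 0 x k) l \<le> fst (arr K m n y k) l + (m' l - m l)"
    proof (intro allI impI)
      fix l assume l: "l < K"
      show "fst (arr K m' 0 x k) l \<le> fst (arr K m n y k) l + (m' l - m l)"
      proof (cases "l = k")
        case True
        have "fst (arr K m' 0 x k) k \<le> m' k" using ax ssD(1)[OF x k] by auto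
        then show ?thesis using True ey b mle k by auto
      next
        case False then show ?thesis using fx fy le l by simp
      qed
    qed
    have "size_st K (arr K m n y k) = size_st K y + 1" using ey size_add2[OF k] by simp
    then show ?thesis unfolding R2_iff using xa ya c1 szx sz by simp
  next
    case c
    then have ey: "arr K m n y k = y" unfolding arr_def by simp
    have c1: "\<forall>l<K. fst (arr K m' 0 x k) l \<le> fst (arr K m n y k) l + (m' l - m l)"
    proof (intro allI impI)
      fix l assume l: "l < K"
      show "fst (arr K m' 0 x k) l \<le> fst (arr K m n y k) l + (m' l - m l)"
      proof (cases "l = k")
        case True
        have "fst (arr K m' 0 x k) k \<le> m' k" using ax ssD(1)[OF x k] by auto
        then show ?thesis using True ey c mle k by auto
      next
        case False then show ?thesis using fx fy le l by simp
      qed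
    qed
    have c2: "size_st K (arr K m' 0 x k) \<le> size_st K y"
    proof (cases "arr K m' 0 x k = x")
      case True then show ?thesis using sz by simp
    next
      case False
      then have a1: "arr K m' 0 x k = add1 x k" "fst x k < m' k" using ax by auto
      have "(\<Sum>l<K. fst x l) < (\<Sum>l<K. fst y l + (m' l - m l))"
      proof (rule sum_strict_mono_ex1)
        show "finite {..<K}" by simp
        show "\<forall>l\<in>{..<K}. fst x l \<le> fst y l + (m' l - m l)" using le by simp
        show "\<exists>l\<in>{..<K}. fst x l < fst y l + (m' l - m l)" using k a1(2) c(1) mle by (intro bexI[of _ k]) auto
      qed
      also have "\<dots> = (\<Sum>l<K. fst y l) + n" by (simp add: sum.distrib dsum)
      also have "\<dots> = size_st K y" unfolding size_st_alt using c(2) by simp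
      finally have "size_st K x < size_st K y" using size0[OF x] by simp
      then show ?thesis using a1 size_add1[OF k, of x] by simp
    qed
    show ?thesis unfolding R2_iff using xa ya c1 c2 ey by simp
  qed
qed

lemma ydep_comp2:
  assumes y: "y \<in> state_space K m n" and k: "k < K" and t: "t = 1 \<or> t = 2" and nz: "lrt lam mu y (k,t) \<noteq> 0"
    and le: "\<forall>l<K. fst x l \<le> fst y l + d l" and nd: "\<not> (t = 1 \<and> fst x k = fst y k + d k)"
  shows "\<forall>l<K. fst x l \<le> fst (lmv K m n y (k,t)) l + d l"
proof (intro allI impI)
  fix l assume l: "l < K"
  show "fst x l \<le> fst (lmv K m n y (k,t)) l + d l"
  proof (cases "t = 1")
    case True
    then have p: "fst y k > 0" using nz by (cases "fst y k") auto
    show ?thesis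
    proof (cases "l = k")
      case True
      then have "fst x k < fst y k + d k" using nd le k \<open>t = 1\<close> by (simp add: order_less_le)
      then show ?thesis using True \<open>t = 1\<close> p by simp
    next
      case False then show ?thesis using le l \<open>t = 1\<close> by simp
    qed
  next
    case False
    then have "t = 2" using t by simp
    then show ?thesis using le l by simp
  qed
qed

lemma coupling2:
  assumes lnn: "\<forall>k<K. lam k \<ge> 0" and mpos: "\<forall>k<K. mu k > 0" and Mpos: "M > 0"
    and mleM: "\<forall>k<K. mu k \<le> M"
    and mle: "\<forall>k<K. m k \<le> m' k" and msum: "(\<Sum>k<K. m' k) = (\<Sum>k<K. m k) + n"
  shows "\<exists>\<rho>. (\<forall>s\<in>R2 K m' m n. \<rho> s \<ge> 0)
     \<and> stationary (state_space K m' 0) (loss_rate K m' 0 lam (\<lambda>_. M)) (\<lambda>x. \<Sum>s\<in>{s\<in>R2 K m' m n. fst s = x}. \<rho> s)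
     \<and> stationary (state_space K m n) (loss_rate K m n lam mu) (\<lambda>y. \<Sum>s\<in>{s\<in>R2 K m' m n. snd s = y}. \<rho> s)"
proof -
  define S1 where "S1 = state_space K m' 0"
  define S2 where "S2 = state_space K m n"
  define D where "D = (\<lambda>(s::state\<times>state) (e::nat\<times>nat). snd e = 0 \<or>
       (snd e = 1 \<and> fst (fst s) (fst e) = fst (snd s) (fst e) + (m' (fst e) - m (fst e))))"
  define tg where "tg = (\<lambda>s::state\<times>state. size_st K (fst s) = size_st K (snd s))"
  define R where "R = R2 K m' m n"
  have mnn: "\<forall>k<K. mu k \<ge> 0" using mpos by (simp add: less_imp_le)
  have Mnn: "\<forall>k<K. (\<lambda>_. M) k \<ge> (0::real)" using Mpos by simp
  have rep1: "rep S1 (loss_rate K m' 0 lam (\<lambda>_. M)) (EV K) (lmv K m' 0) (lrt lam (\<lambda>_. M))"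
    unfolding S1_def by (rule rep_loss[OF lnn Mnn])
  have rep2: "rep S2 (loss_rate K m n lam mu) (EV K) (lmv K m n) (lrt lam mu)"
    unfolding S2_def by (rule rep_loss[OF lnn mnn])
  have RS: "R \<subseteq> S1 \<times> S2" unfolding R_def R2_def S1_def S2_def by auto
  have Rne: "R \<noteq> {}"
  proof -
    have "(z0, z0) \<in> R" unfolding R_def R2_iff using z0_ss by simp
    then show ?thesis by blast
  qed
  have EVd: "e \<in> EV K \<Longrightarrow> (\<exists>k t. e = (k,t) \<and> k < K \<and> (t = 0 \<or> t = 1 \<or> t = 2))" for e
    unfolding EV_def by auto
  have H1: "\<forall>s\<in>R. \<forall>e\<in>EV K. D s e \<longrightarrow> lrt lam mu (snd s) e \<le> lrt lam (\<lambda>_. M) (fst s) e"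
  proof (intro ballI impI)
    fix s e assume s: "s \<in> R" and e: "e \<in> EV K" and De: "D s e"
    obtain k t where kt: "e = (k,t)" "k < K" "t = 0 \<or> t = 1 \<or> t = 2" using EVd[OF e] by blast
    show "lrt lam mu (snd s) e \<le> lrt lam (\<lambda>_. M) (fst s) e"
    proof (cases "t = 0")
      case True then show ?thesis using kt by simp
    next
      case False
      then have c: "t = 1" "fst (fst s) k = fst (snd s) k + (m' k - m k)" using De kt unfolding D_def by auto
      have "mu k * real (fst (snd s) k) \<le> M * real (fst (snd s) k)"
        using mleM kt(2) by (intro mult_right_mono) auto
      also have "\<dots> \<le> M * real (fst (fst s) k)" using c Mpos by (intro mult_left_mono) auto
      finally show ?thesis using kt c by simp
    qed
  qed
  have H2: "\<forall>s\<in>R. tg s \<longrightarrow> (\<Sum>e\<in>EV K. lrt lam mu (snd s) e) \<le> (\<Sum>e\<in>EV K. lrt lam (\<lambda>_. M) (fst s) e)"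
  proof (intro ballI impI)
    fix s assume s: "s \<in> R" and t: "tg s"
    have "(\<Sum>e\<in>EV K. lrt lam mu (snd s) e) = (\<Sum>k<K. lam k + mu k * real (fst (snd s) k) + mu k * real (snd (snd s) k))"
      unfolding sum_EV by simp
    also have "\<dots> \<le> (\<Sum>k<K. lam k + M * real (fst (snd s) k) + M * real (snd (snd s) k))"
      using mleM by (intro sum_mono add_mono mult_right_mono) auto
    also have "\<dots> = (\<Sum>k<K. lam k) + M * real (size_st K (snd s))"
      unfolding sum_size by (simp add: sum.distrib sum_distrib_left distrib_left)
    also have "\<dots> = (\<Sum>k<K. lam k) + M * real (size_st K (fst s))" using t unfolding tg_def by simp
    also have "\<dots> = (\<Sum>e\<in>EV K. lrt lam (\<lambda>_. M) (fst s) e)"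
      unfolding sum_EV sum_size by (simp add: sum.distrib sum_distrib_left distrib_left)
    finally show "(\<Sum>e\<in>EV K. lrt lam mu (snd s) e) \<le> (\<Sum>e\<in>EV K. lrt lam (\<lambda>_. M) (fst s) e)" .
  qed
  have V1: "\<forall>s\<in>R. \<forall>j\<in>EV K. D s j \<longrightarrow> lrt lam mu (snd s) j \<noteq> 0 \<longrightarrow> (lmv K m' 0 (fst s) j, lmv K m n (snd s) j) \<in> R"
  proof (intro ballI impI)
    fix s j assume s: "s \<in> R" and j: "j \<in> EV K" and Dj: "D s j" and nz: "lrt lam mu (snd s) j \<noteq> 0"
    obtain x y where xy: "s = (x,y)" by (cases s)
    have sR: "(x,y) \<in> R2 K m' m n" using s xy unfolding R_def by simp
    then have x: "x \<in> state_space K m' 0" and y: "y \<in> state_space K m n"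
      and le: "\<forall>l<K. fst x l \<le> fst y l + (m' l - m l)" and sz: "size_st K x \<le> size_st K y" unfolding R2_iff by auto
    obtain k t where kt: "j = (k,t)" "k < K" "t = 0 \<or> t = 1 \<or> t = 2" using EVd[OF j] by blast
    show "(lmv K m' 0 (fst s) j, lmv K m n (snd s) j) \<in> R"
    proof (cases "t = 0")
      case True then show ?thesis using arr_R2[OF sR kt(2) mle msum] kt xy unfolding R_def by simp
    next
      case False
      then have c: "t = 1" "fst x k = fst y k + (m' k - m k)" using Dj kt xy unfolding D_def by auto
      have p: "fst y k > 0" using nz c kt xy by (cases "fst y k") auto
      then have px: "fst x k > 0" using c by simp
      have ex: "lmv K m' 0 (fst s) j = sub1 x k" and ey: "lmv K m n (snd s) j = sub1 y k" using kt xy c by auto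
      have c1: "\<forall>l<K. fst (sub1 x k) l \<le> fst (sub1 y k) l + (m' l - m l)" using le c p by auto
      have c2: "size_st K (sub1 x k) \<le> size_st K (sub1 y k)"
        using size_sub1[OF kt(2), of x] size_sub1[OF kt(2), of y] p px sz by simp
      show ?thesis unfolding ex ey R_def R2_iff using ss_sub1[OF x] ss_sub1[OF y] c1 c2 by blast
    qed
  qed
  have aprX: "lrt lam (\<lambda>_. M) x i \<noteq> 0 \<and> snd i \<noteq> 0"
    if s: "(x,y) \<in> R" and i: "i \<in> EV K" and a: "apr (lrt lam (\<lambda>_. M) x) (lrt lam mu y) (D (x,y)) i \<noteq> 0" for x y i
  proof
    have "D (x,y) i \<longrightarrow> lrt lam mu y i \<le> lrt lam (\<lambda>_. M) x i" using H1 s i by force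
    moreover have "lrt lam mu y i \<ge> 0"
    proof -
      have "y \<in> S2" using s RS by auto
      then show ?thesis using rep2 i unfolding rep_def by blast
    qed
    ultimately show "lrt lam (\<lambda>_. M) x i \<noteq> 0" using apr_nz1[OF a] by blast
    show "snd i \<noteq> 0"
    proof
      assume "snd i = 0"
      then have "D (x,y) i" unfolding D_def by simp
      from apr_nz2[OF a this] \<open>snd i = 0\<close> show False by (cases i) simp
    qed
  qed
  have V2: "\<forall>s\<in>R. \<forall>i\<in>EV K. \<forall>j\<in>EV K. \<not> D s j \<longrightarrow> tg s \<longrightarrow> lrt lam mu (snd s) j \<noteq> 0 \<longrightarrow>
        apr (lrt lam (\<lambda>_. M) (fst s)) (lrt lam mu (snd s)) (D s) i \<noteq> 0 \<longrightarrow> (lmv K m' 0 (fst s) i, lmv K m n (snd s) j) \<in> R"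
  proof (intro ballI impI)
    fix s i j assume s: "s \<in> R" and i: "i \<in> EV K" and j: "j \<in> EV K" and nD: "\<not> D s j" and t: "tg s"
      and nz: "lrt lam mu (snd s) j \<noteq> 0" and a: "apr (lrt lam (\<lambda>_. M) (fst s)) (lrt lam mu (snd s)) (D s) i \<noteq> 0"
    obtain x y where xy: "s = (x,y)" by (cases s)
    have sR: "(x,y) \<in> R" using s xy by simp
    then have x: "x \<in> state_space K m' 0" and y: "y \<in> state_space K m n"
      and le: "\<forall>l<K. fst x l \<le> fst y l + (m' l - m l)" and sz: "size_st K x = size_st K y"
      using t xy unfolding R_def R2_iff tg_def by auto
    obtain k t where kt: "j = (k,t)" "k < K" "t = 0 \<or> t = 1 \<or> t = 2" using EVd[OF j] by blast
    have t12: "t = 1 \<or> t = 2" "t \<noteq> 0" "t \<in> {0,1,2}" using nD kt xy unfolding D_def by auto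
    have nd: "\<not> (t = 1 \<and> fst x k = fst y k + (m' k - m k))" using nD kt xy unfolding D_def by auto
    have nzy: "lrt lam mu y (k,t) \<noteq> 0" using nz kt xy by simp
    obtain l u where lu: "i = (l,u)" "l < K" "u = 0 \<or> u = 1 \<or> u = 2" using EVd[OF i] by blast
    have ax: "lrt lam (\<lambda>_. M) x (l,u) \<noteq> 0" "u \<noteq> 0" using aprX[OF sR i] a xy lu by auto
    have u3: "u \<in> {0,1,2}" using lu(3) by auto
    note dx = dep_loss[OF x lu(2) ax(2) u3 ax(1)]
    note dy = dep_loss[OF y kt(2) t12(2) t12(3) nzy]
    have c1: "\<forall>l'<K. fst (lmv K m' 0 x (l,u)) l' \<le> fst (lmv K m n y (k,t)) l' + (m' l' - m l')"
    proof (intro allI impI)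
      fix l' assume l': "l' < K"
      have "fst (lmv K m' 0 x (l,u)) l' \<le> fst x l'" using dx by blast
      also have "\<dots> \<le> fst (lmv K m n y (k,t)) l' + (m' l' - m l')"
        using ydep_comp2[OF y kt(2) t12(1) nzy le nd] l' by blast
      finally show "fst (lmv K m' 0 x (l,u)) l' \<le> fst (lmv K m n y (k,t)) l' + (m' l' - m l')" .
    qed
    have c2: "size_st K (lmv K m' 0 x (l,u)) \<le> size_st K (lmv K m n y (k,t))"
      using dx dy sz by linarith
    show "(lmv K m' 0 (fst s) i, lmv K m n (snd s) j) \<in> R"
      unfolding R_def R2_iff using dx dy c1 c2 xy lu kt by auto
  qed
  have V3: "\<forall>s\<in>R. \<forall>i\<in>EV K. apr (lrt lam (\<lambda>_. M) (fst s)) (lrt lam mu (snd s)) (D s) i \<noteq> 0 \<longrightarrow> (lmv K m' 0 (fst s) i, snd s) \<in> R"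
  proof (intro ballI impI)
    fix s i assume s: "s \<in> R" and i: "i \<in> EV K"
      and a: "apr (lrt lam (\<lambda>_. M) (fst s)) (lrt lam mu (snd s)) (D s) i \<noteq> 0"
    obtain x y where xy: "s = (x,y)" by (cases s)
    have sR: "(x,y) \<in> R" using s xy by simp
    then have x: "x \<in> state_space K m' 0" and y: "y \<in> state_space K m n"
      and le: "\<forall>l<K. fst x l \<le> fst y l + (m' l - m l)" and sz: "size_st K x \<le> size_st K y"
      unfolding R_def R2_iff by auto
    obtain l u where lu: "i = (l,u)" "l < K" "u = 0 \<or> u = 1 \<or> u = 2" using EVd[OF i] by blast
    have ax: "lrt lam (\<lambda>_. M) x (l,u) \<noteq> 0" "u \<noteq> 0" using aprX[OF sR i] a xy lu by auto
    have u3: "u \<in> {0,1,2}" using lu(3) by auto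
    note dx = dep_loss[OF x lu(2) ax(2) u3 ax(1)]
    have c1: "\<forall>l'<K. fst (lmv K m' 0 x (l,u)) l' \<le> fst y l' + (m' l' - m l')"
    proof (intro allI impI)
      fix l' assume l': "l' < K"
      have "fst (lmv K m' 0 x (l,u)) l' \<le> fst x l'" using dx by blast
      also have "\<dots> \<le> fst y l' + (m' l' - m l')" using le l' by blast
      finally show "fst (lmv K m' 0 x (l,u)) l' \<le> fst y l' + (m' l' - m l')" .
    qed
    have c2: "size_st K (lmv K m' 0 x (l,u)) \<le> size_st K y" using dx sz by linarith
    show "(lmv K m' 0 (fst s) i, snd s) \<in> R"
      unfolding R_def R2_iff using dx c1 c2 xy lu y by auto
  qed
  have V4: "\<forall>s\<in>R. \<forall>j\<in>EV K. \<not> D s j \<longrightarrow> \<not> tg s \<longrightarrow> lrt lam mu (snd s) j \<noteq> 0 \<longrightarrow> (fst s, lmv K m n (snd s) j) \<in> R"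
  proof (intro ballI impI)
    fix s j assume s: "s \<in> R" and j: "j \<in> EV K" and nD: "\<not> D s j" and t: "\<not> tg s"
      and nz: "lrt lam mu (snd s) j \<noteq> 0"
    obtain x y where xy: "s = (x,y)" by (cases s)
    have sR: "(x,y) \<in> R" using s xy by simp
    then have x: "x \<in> state_space K m' 0" and y: "y \<in> state_space K m n"
      and le: "\<forall>l<K. fst x l \<le> fst y l + (m' l - m l)" and sz: "size_st K x < size_st K y"
      using t xy unfolding R_def R2_iff tg_def by auto
    obtain k t where kt: "j = (k,t)" "k < K" "t = 0 \<or> t = 1 \<or> t = 2" using EVd[OF j] by blast
    have t12: "t = 1 \<or> t = 2" "t \<noteq> 0" "t \<in> {0,1,2}" using nD kt xy unfolding D_def by auto
    have nd: "\<not> (t = 1 \<and> fst x k = fst y k + (m' k - m k))" using nD kt xy unfolding D_def by auto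
    have nzy: "lrt lam mu y (k,t) \<noteq> 0" using nz kt xy by simp
    note dy = dep_loss[OF y kt(2) t12(2) t12(3) nzy]
    have c1: "\<forall>l'<K. fst x l' \<le> fst (lmv K m n y (k,t)) l' + (m' l' - m l')"
      by (rule ydep_comp2[OF y kt(2) t12(1) nzy le nd])
    have c2: "size_st K x \<le> size_st K (lmv K m n y (k,t))" using dy sz by linarith
    show "(fst s, lmv K m n (snd s) j) \<in> R"
      unfolding R_def R2_iff using dy c1 c2 xy kt x by auto
  qed
  obtain \<rho> where r: "stationary R (cq (EV K) (lmv K m' 0) (lmv K m n) (\<lambda>s. pw (EV K) (lrt lam (\<lambda>_. M) (fst s)) (lrt lam mu (snd s)) (D s) (tg s))) \<rho>"
     "stationary S1 (loss_rate K m' 0 lam (\<lambda>_. M)) (\<lambda>x. \<Sum>s\<in>{s\<in>R. fst s = x}. \<rho> s)"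
     "stationary S2 (loss_rate K m n lam mu) (\<lambda>y. \<Sum>s\<in>{s\<in>R. snd s = y}. \<rho> s)"
    using coupling_thm[OF rep1 rep2 finite_ss[of K m' 0, folded S1_def] finite_ss[of K m n, folded S2_def] RS Rne H1 H2 V1 V2 V3 V4]
    by blast
  have "\<forall>s\<in>R. \<rho> s \<ge> 0" using r(1) unfolding stationary_def by blast
  then show ?thesis using r(2,3) unfolding R_def S1_def S2_def by blast
qed



lemma mean_k_nn: "\<forall>x\<in>S. p x \<ge> 0 \<Longrightarrow> mean_k S p k \<ge> 0"
  unfolding mean_k_def by (intro sum_nonneg) auto

lemma thr_const: "throughput K (\<lambda>_. c) S p = c * mean_total K S p"
  unfolding throughput_def mean_total_def by (simp add: sum_distrib_left)

lemma thr_le: "\<forall>x\<in>S. p x \<ge> 0 \<Longrightarrow> \<forall>k<K. mu k \<le> M \<Longrightarrow> throughput K mu S p \<le> M * mean_total K S p"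
  unfolding throughput_def mean_total_def sum_distrib_left
  by (intro sum_mono mult_right_mono) (auto intro: mean_k_nn)

lemma thr_ge: "\<forall>x\<in>S. p x \<ge> 0 \<Longrightarrow> \<forall>k<K. c \<le> mu k \<Longrightarrow> c * mean_total K S p \<le> throughput K mu S p"
  unfolding throughput_def mean_total_def sum_distrib_left
  by (intro sum_mono mult_right_mono) (auto intro: mean_k_nn)

lemma stat_nn: "stationary S q p \<Longrightarrow> \<forall>x\<in>S. p x \<ge> 0" unfolding stationary_def by blast

theorem theorem8:
  fixes K n :: nat and m :: "nat \<Rightarrow> nat" and lam mu :: "nat \<Rightarrow> real"
    and p pmp :: "state \<Rightarrow> real"
  assumes K_pos: "K \<ge> 1"
    and lam_pos: "\<forall>k<K. lam k > 0"
    and mu_pos: "\<forall>k<K. mu k > 0"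
    and stat: "stationary (state_space K m n) (loss_rate K m n lam mu) p"
    and stat_mp: "stationary (state_space K m n)
                    (mp_rate K m n lam (\<lambda>_. Min (mu ` {..<K}))) pmp"
  shows
   "let mumin = Min (mu ` {..<K}); mumax = Max (mu ` {..<K}); r = mumax / mumin;
        S = state_space K m n
    in
      size_st_le K S p S pmp
    \<and> mean_total K S p \<le> mean_total K S pmp
    \<and> throughput K mu S p \<le> r * throughput K (\<lambda>_. mumin) S pmp
    \<and> 1 - r * (1 - blocking K m n lam S pmp) \<le> blocking K m n lam S p
    \<and> (\<forall>m'\<in>C_set K m n. \<forall>p'.
          stationary (state_space K m' 0) (loss_rate K m' 0 lam (\<lambda>_. mumax)) p' \<longrightarrow>
            size_st_le K (state_space K m' 0) p' S p
          \<and> mean_total K (state_space K m' 0) p' \<le> mean_total K S p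
          \<and> throughput K (\<lambda>_. mumax) (state_space K m' 0) p' / r \<le> throughput K mu S p
          \<and> blocking K m n lam S p
              \<le> 1 - (1 - blocking K m' 0 lam (state_space K m' 0) p') / r)"
proof -
  define nu where "nu = Min (mu ` {..<K})"
  define M where "M = Max (mu ` {..<K})"
  define r where "r = M / nu"
  define S where "S = state_space K m n"
  have fin: "finite (mu ` {..<K})" by simp
  have ne: "mu ` {..<K} \<noteq> {}"
  proof -
    have "(0::nat) \<in> {..<K}" using K_pos by simp
    then show ?thesis by blast
  qed
  have nule: "\<forall>k<K. nu \<le> mu k" unfolding nu_def using fin by auto
  have Mge: "\<forall>k<K. mu k \<le> M" unfolding M_def using fin by auto
  have nupos: "nu > 0"
  proof -
    have "nu \<in> mu ` {..<K}" unfolding nu_def using fin ne by (rule Min_in)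
    then show ?thesis using mu_pos by auto
  qed
  have nuM: "nu \<le> M" using nule Mge K_pos by (meson order_trans zero_less_one less_le_trans)
  have Mpos: "M > 0" using nupos nuM by linarith
  have rpos: "r > 0" unfolding r_def using nupos Mpos by simp
  have Mr: "M = r * nu" unfolding r_def using nupos by simp
  have lnn: "\<forall>k<K. lam k \<ge> 0" using lam_pos by (simp add: less_imp_le)
  have mnn: "\<forall>k<K. mu k \<ge> 0" using mu_pos by (simp add: less_imp_le)
  have Lpos: "(\<Sum>k<K. lam k) > 0"
  proof (rule sum_pos)
    show "finite {..<K}" by simp
    show "{..<K} \<noteq> {}" using ne by blast
    show "\<And>i. i \<in> {..<K} \<Longrightarrow> 0 < lam i" using lam_pos by simp
  qed
  have pnn: "\<forall>x\<in>S. p x \<ge> 0" using stat_nn[OF stat] unfolding S_def .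
  have pmpnn: "\<forall>x\<in>S. pmp x \<ge> 0" using stat_nn[OF stat_mp] unfolding S_def nu_def .
  obtain \<rho> where r1: "\<forall>s\<in>R1 K m n. \<rho> s \<ge> 0"
     "stationary S (loss_rate K m n lam mu) (\<lambda>x. \<Sum>s\<in>{s\<in>R1 K m n. fst s = x}. \<rho> s)"
     "stationary S (mp_rate K m n lam (\<lambda>_. nu)) (\<lambda>y. \<Sum>s\<in>{s\<in>R1 K m n. snd s = y}. \<rho> s)"
    using coupling1[OF lnn mu_pos nupos nule] unfolding S_def by blast
  have nnu: "\<forall>k<K. (\<lambda>_. nu) k \<ge> (0::real)" using nupos by simp
  have pu: "\<forall>x\<in>S. p x = (\<Sum>s\<in>{s\<in>R1 K m n. fst s = x}. \<rho> s)"
    using stat_unique[OF finite_ss z0_ss reach_loss[OF lnn mu_pos] rep_nonneg[OF rep_loss[OF lnn mnn]] stat r1(2)[unfolded S_def]]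
    unfolding S_def .
  have pmpu: "\<forall>x\<in>S. pmp x = (\<Sum>s\<in>{s\<in>R1 K m n. snd s = x}. \<rho> s)"
  proof -
    have nupos': "\<forall>k<K. (\<lambda>_. nu) k > (0::real)" using nupos by simp
    show ?thesis
      using stat_unique[OF finite_ss z0_ss reach_mp[OF lnn nupos'] rep_nonneg[OF rep_mp[OF lnn nnu]] stat_mp[folded nu_def] r1(3)[unfolded S_def]]
      unfolding S_def .
  qed
  have R1S: "R1 K m n \<subseteq> S \<times> S" unfolding R1_def S_def by auto
  have R1le: "\<forall>s\<in>R1 K m n. size_st K (fst s) \<le> size_st K (snd s)" unfolding R1_def by auto
  have cmp1: "size_st_le K S p S pmp \<and> mean_total K S p \<le> mean_total K S pmp"
    by (rule compare[OF finite_ss[of K m n, folded S_def] finite_ss[of K m n, folded S_def] R1S r1(1) R1le pu pmpu])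
  have thr1: "throughput K mu S p \<le> r * throughput K (\<lambda>_. nu) S pmp"
  proof -
    have "throughput K mu S p \<le> M * mean_total K S p" by (rule thr_le[OF pnn Mge])
    also have "\<dots> \<le> M * mean_total K S pmp" using cmp1 Mpos by (intro mult_left_mono) auto
    also have "\<dots> = r * throughput K (\<lambda>_. nu) S pmp" unfolding thr_const Mr by simp
    finally show ?thesis .
  qed
  have bl_p: "blocking K m n lam S p = 1 - throughput K mu S p / (\<Sum>k<K. lam k)"
    by (rule blocking_eq[OF _ Lpos]) (use little_loss[OF stat lnn mnn] in \<open>auto simp: S_def\<close>)
  have bl_pmp: "blocking K m n lam S pmp = 1 - throughput K (\<lambda>_. nu) S pmp / (\<Sum>k<K. lam k)"
    by (rule blocking_eq[OF _ Lpos]) (use little_mp[OF stat_mp[folded nu_def] lnn nnu] in \<open>auto simp: S_def\<close>)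
  have blk1: "1 - r * (1 - blocking K m n lam S pmp) \<le> blocking K m n lam S p"
  proof -
    have "r * (throughput K (\<lambda>_. nu) S pmp / (\<Sum>k<K. lam k)) \<ge> throughput K mu S p / (\<Sum>k<K. lam k)"
      using thr1 Lpos by (simp add: divide_right_mono times_divide_eq_right)
    then show ?thesis unfolding bl_p bl_pmp by simp
  qed
  have part2: "size_st_le K (state_space K m' 0) p' S p
          \<and> mean_total K (state_space K m' 0) p' \<le> mean_total K S p
          \<and> throughput K (\<lambda>_. M) (state_space K m' 0) p' / r \<le> throughput K mu S p
          \<and> blocking K m n lam S p \<le> 1 - (1 - blocking K m' 0 lam (state_space K m' 0) p') / r"
    if m': "m' \<in> C_set K m n" and st': "stationary (state_space K m' 0) (loss_rate K m' 0 lam (\<lambda>_. M)) p'" for m' p'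
  proof -
    define S' where "S' = state_space K m' 0"
    have mle: "\<forall>k<K. m k \<le> m' k" and msum: "(\<Sum>k<K. m' k) = (\<Sum>k<K. m k) + n"
      using m' unfolding C_set_def by auto
    obtain \<sigma> where r2: "\<forall>s\<in>R2 K m' m n. \<sigma> s \<ge> 0"
       "stationary S' (loss_rate K m' 0 lam (\<lambda>_. M)) (\<lambda>x. \<Sum>s\<in>{s\<in>R2 K m' m n. fst s = x}. \<sigma> s)"
       "stationary S (loss_rate K m n lam mu) (\<lambda>y. \<Sum>s\<in>{s\<in>R2 K m' m n. snd s = y}. \<sigma> s)"
      using coupling2[OF lnn mu_pos Mpos Mge mle msum] unfolding S_def S'_def by blast
    have Mnn: "\<forall>k<K. (\<lambda>_. M) k \<ge> (0::real)" using Mpos by simp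
    have Mpos': "\<forall>k<K. (\<lambda>_. M) k > (0::real)" using Mpos by simp
    have p'u: "\<forall>x\<in>S'. p' x = (\<Sum>s\<in>{s\<in>R2 K m' m n. fst s = x}. \<sigma> s)"
      using stat_unique[OF finite_ss z0_ss reach_loss[OF lnn Mpos'] rep_nonneg[OF rep_loss[OF lnn Mnn]] st' r2(2)[unfolded S'_def]]
      unfolding S'_def .
    have pu2: "\<forall>x\<in>S. p x = (\<Sum>s\<in>{s\<in>R2 K m' m n. snd s = x}. \<sigma> s)"
      using stat_unique[OF finite_ss z0_ss reach_loss[OF lnn mu_pos] rep_nonneg[OF rep_loss[OF lnn mnn]] stat r2(3)[unfolded S_def]]
      unfolding S_def .
    have R2S: "R2 K m' m n \<subseteq> S' \<times> S" unfolding R2_def S_def S'_def by auto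
    have R2le: "\<forall>s\<in>R2 K m' m n. size_st K (fst s) \<le> size_st K (snd s)" unfolding R2_def by auto
    have cmp2: "size_st_le K S' p' S p \<and> mean_total K S' p' \<le> mean_total K S p"
      by (rule compare[OF finite_ss[of K m' 0, folded S'_def] finite_ss[of K m n, folded S_def] R2S r2(1) R2le p'u pu2])
    have p'nn: "\<forall>x\<in>S'. p' x \<ge> 0" using stat_nn[OF st'] unfolding S'_def .
    have thr2: "throughput K (\<lambda>_. M) S' p' / r \<le> throughput K mu S p"
    proof -
      have "throughput K (\<lambda>_. M) S' p' / r = nu * mean_total K S' p'"
        unfolding thr_const Mr using rpos by simp
      also have "\<dots> \<le> nu * mean_total K S p" using cmp2 nupos by (intro mult_left_mono) auto
      also have "\<dots> \<le> throughput K mu S p" by (rule thr_ge[OF pnn nule])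
      finally show ?thesis .
    qed
    have bl_p': "blocking K m' 0 lam S' p' = 1 - throughput K (\<lambda>_. M) S' p' / (\<Sum>k<K. lam k)"
      by (rule blocking_eq[OF _ Lpos]) (use little_loss[OF st' lnn Mnn] in \<open>auto simp: S'_def\<close>)
    have blk2: "blocking K m n lam S p \<le> 1 - (1 - blocking K m' 0 lam S' p') / r"
    proof -
      have "throughput K (\<lambda>_. M) S' p' / r / (\<Sum>k<K. lam k) \<le> throughput K mu S p / (\<Sum>k<K. lam k)"
        using divide_right_mono[OF thr2, of "\<Sum>k<K. lam k"] Lpos by simp
      then show ?thesis unfolding bl_p bl_p' by (simp add: divide_divide_eq_left mult.commute)
    qed
    show ?thesis using cmp2 thr2 blk2 unfolding S'_def by blast
  qed
  show ?thesis
    unfolding Let_def nu_def[symmetric] M_def[symmetric] r_def[symmetric] S_def[symmetric]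
    using cmp1 thr1 blk1 part2 by blast
qed

end
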